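(* Let $C>e^{-1}$ and $\varepsilon\in(0,1)$ be constants. Suppose $\frac{C^2(\log_2 n)^2}{n}\le x_\gamma\le1-\varepsilon$. Then for every $T>0$ and all sufficiently large $n$, from any initial configuration: $$\Pr[\tau^+_\gamma\ge T]\le\frac{64e^2}{\varepsilon}\cdot\frac{x_\gamma n}{T}\ \text{for 3-Majority},\qquad \Pr[\tau^+_\gamma\ge T]\le\frac{192e^2}{\varepsilon^2}\cdot\frac{x_\gamma n^2}{T}\ \text{for 2-Choices}.$$
   Context: **Setting.** Let $V$ be a set of $n$ vertices and $k\in\{1,\dots,n\}$. A configuration is a map $\mathsf{opn}\colon V\to[k]$. The process is synchronous: each round $t\ge1$ produces $\mathsf{opn}_t$ from $\mathsf{opn}_{t-1}$, and all vertices make their choices independently. **3-Majority.** Each vertex $v$ samples $w_1,w_2,w_3\in V$ independently and uniformly, with replacement. It sets $\mathsf{opn}_t(v)=\mathsf{opn}_{t-1}(w_1)$ if $\mathsf{opn}_{t-1}(w_1)=\mathsf{opn}_{t-1}(w_2)$, and $\mathsf{opn}_t(v)=\mathsf{opn}_{t-1}(w_3)$ otherwise. **2-Choices.** Each vertex $v$ samples $w_1,w_2\in V$ independently and uniformly, with replacement. It sets $\mathsf{opn}_t(v)=\mathsf{opn}_{t-1}(w_1)$ if $\mathsf{opn}_{t-1}(w_1)=\mathsf{opn}_{t-1}(w_2)$, and $\mathsf{opn}_t(v)=\mathsf{opn}_{t-1}(v)$ otherwise. **Basic quantities.** - $\alpha_t(i)=|\{v:\mathsf{opn}_t(v)=i\}|/n$.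 - $\gamma_t=\sum_i\alpha_t(i)^2$. - $\tau^+_\gamma=\inf\{t\ge0:\gamma_t\ge x_\gamma\}$. *)

theory Defs
  imports "HOL-Probability.Probability"
begin

text \<open>Vertices are V = {0..<n}; opinions are [k] = {1..k}; a configuration is a map
  nat => nat (only its values on V matter).\<close>

type_synonym config = "nat \<Rightarrow> nat"

definition alpha :: "nat \<Rightarrow> config \<Rightarrow> nat \<Rightarrow> real" where
  "alpha n opn i = real (card {v \<in> {0..<n}. opn v = i}) / real n"

definition gamma :: "nat \<Rightarrow> nat \<Rightarrow> config \<Rightarrow> real" where
  "gamma n k opn = (\<Sum>i\<in>{1..k}. (alpha n opn i)^2)"

definition three_majority_vertex :: "nat \<Rightarrow> config \<Rightarrow> nat pmf" where
  "three_majority_vertex n opn =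
     do { w1 \<leftarrow> pmf_of_set {0..<n}; w2 \<leftarrow> pmf_of_set {0..<n}; w3 \<leftarrow> pmf_of_set {0..<n};
          return_pmf (if opn w1 = opn w2 then opn w1 else opn w3) }"

definition two_choices_vertex :: "nat \<Rightarrow> config \<Rightarrow> nat \<Rightarrow> nat pmf" where
  "two_choices_vertex n opn v =
     do { w1 \<leftarrow> pmf_of_set {0..<n}; w2 \<leftarrow> pmf_of_set {0..<n};
          return_pmf (if opn w1 = opn w2 then opn w1 else opn v) }"

definition three_majority_step :: "nat \<Rightarrow> config \<Rightarrow> config pmf" where
  "three_majority_step n opn = Pi_pmf {0..<n} 0 (\<lambda>v. three_majority_vertex n opn)"

definition two_choices_step :: "nat \<Rightarrow> config \<Rightarrow> config pmf" where
  "two_choices_step n opn = Pi_pmf {0..<n} 0 (\<lambda>v. two_choices_vertex n opn v)"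

fun traj :: "(config \<Rightarrow> config pmf) \<Rightarrow> config \<Rightarrow> nat \<Rightarrow> config list pmf" where
  "traj K opn 0 = return_pmf [opn]"
| "traj K opn (Suc m) = bind_pmf (K opn) (\<lambda>opn'. map_pmf (\<lambda>l. opn # l) (traj K opn' m))"

text \<open>Pr[tau^+_gamma >= T], where tau^+_gamma = inf {t >= 0. gamma_t >= x_gamma}:
  the event that gamma_t < x_gamma for every integer t with 0 <= t < T.
  Rounds 0..ceil(T) cover all such t.\<close>
definition tau_gamma_ge_prob ::
  "(config \<Rightarrow> config pmf) \<Rightarrow> nat \<Rightarrow> nat \<Rightarrow> real \<Rightarrow> config \<Rightarrow> real \<Rightarrow> real" where
  "tau_gamma_ge_prob K n k x_gamma opn0 T =
     measure_pmf.prob (traj K opn0 (nat \<lceil>T\<rceil>))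
       {l. \<forall>t<length l. real t < T \<longrightarrow> gamma n k (l ! t) < x_gamma}"

end

theory Submission
  imports Defs "HOL-Real_Asymp.Real_Asymp"
begin

lemma integral_bind_pmf_bounded:
  fixes f :: "'b \<Rightarrow> real"
  assumes "\<And>x. \<bar>f x\<bar> \<le> B"
  shows "measure_pmf.expectation (bind_pmf M N) f =
         measure_pmf.expectation M (\<lambda>x. measure_pmf.expectation (N x) f)"
  unfolding measure_pmf_bind
  apply (rule integral_bind[where K="count_space UNIV" and B=B and B'=1])
  using assms by (auto simp: measure_pmf_in_subprob_algebra)

lemma pmf_integrable_bounded:
  fixes f :: "'b \<Rightarrow> real"
  assumes "\<And>x. \<bar>f x\<bar> \<le> B"
  shows "integrable (measure_pmf M) f"
  by (rule measure_pmf.integrable_const_bound[where B=B]) (use assms in auto)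

fun surv :: "(config \<Rightarrow> config pmf) \<Rightarrow> (config \<Rightarrow> real) \<Rightarrow> real \<Rightarrow> nat \<Rightarrow> config \<Rightarrow> real" where
  "surv K g x 0 c = 1"
| "surv K g x (Suc m) c = (if g c < x then measure_pmf.expectation (K c) (surv K g x m) else 0)"

lemma surv_bounds: "0 \<le> surv K g x m c \<and> surv K g x m c \<le> 1"
proof (induction m arbitrary: c)
  case 0 then show ?case by simp
next
  case (Suc m)
  have i: "integrable (measure_pmf (K c)) (surv K g x m)"
    by (rule pmf_integrable_bounded[where B=1]) (use Suc in auto)
  have "measure_pmf.expectation (K c) (surv K g x m) \<le> measure_pmf.expectation (K c) (\<lambda>_. 1)"
    by (rule integral_mono[OF i]) (use Suc in auto)
  moreover have "0 \<le> measure_pmf.expectation (K c) (surv K g x m)"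
    by (rule integral_nonneg_AE) (use Suc in auto)
  ultimately show ?case by auto
qed

lemma surv_abs: "\<bar>surv K g x m c\<bar> \<le> 1"
  using surv_bounds[of K g x m c] by linarith

lemma surv_mono: "surv K g x (Suc m) c \<le> surv K g x m c"
proof (induction m arbitrary: c)
  case 0 then show ?case using surv_bounds[of K g x 1 c] by simp
next
  case (Suc m)
  show ?case
  proof (cases "g c < x")
    case True
    have "measure_pmf.expectation (K c) (surv K g x (Suc m)) \<le> measure_pmf.expectation (K c) (surv K g x m)"
      by (rule integral_mono[OF pmf_integrable_bounded[OF surv_abs] pmf_integrable_bounded[OF surv_abs] Suc.IH])
    then show ?thesis using True by simp
  qed simp
qed

lemma surv_anti: "m \<le> m' \<Longrightarrow> surv K g x m' c \<le> surv K g x m c"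
proof (induction m' rule: dec_induct)
  case (step n)
  then show ?case using surv_mono[of K g x n c] by linarith
qed simp

lemma surv_traj:
  "measure_pmf.prob (traj K c m) {l. \<forall>t<m. g (l!t) < x} = surv K g x m c"
proof (induction m arbitrary: c)
  case 0 then show ?case by simp
next
  case (Suc m)
  have "measure_pmf.prob (traj K c (Suc m)) {l. \<forall>t<Suc m. g (l!t) < x}
      = measure_pmf.expectation (traj K c (Suc m)) (indicator {l. \<forall>t<Suc m. g (l!t) < x})"
    by simp
  also have "\<dots> = measure_pmf.expectation (K c) (\<lambda>c'. measure_pmf.expectation
        (map_pmf (\<lambda>l. c # l) (traj K c' m)) (indicator {l. \<forall>t<Suc m. g (l!t) < x}))"
    by (simp only: traj.simps, rule integral_bind_pmf_bounded[where B=1]) auto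
  also have "\<dots> = measure_pmf.expectation (K c) (\<lambda>c'. (if g c < x then 1 else 0) *
        measure_pmf.expectation (traj K c' m) (indicator {l. \<forall>t<m. g (l!t) < x}))"
  proof (rule Bochner_Integration.integral_cong[OF refl])
    fix c'
    have "\<And>l. indicator {l. \<forall>t<Suc m. g (l!t) < x} (c # l) =
          (if g c < x then 1 else 0) * (indicator {l. \<forall>t<m. g (l!t) < x} l :: real)"
    proof -
      fix l :: "config list"
      have "(\<forall>t<Suc m. g ((c#l)!t) < x) \<longleftrightarrow> g c < x \<and> (\<forall>t<m. g (l!t) < x)"
        by (auto simp: less_Suc_eq_0_disj)
      then show "indicator {l. \<forall>t<Suc m. g (l!t) < x} (c # l) =
          (if g c < x then 1 else 0) * (indicator {l. \<forall>t<m. g (l!t) < x} l :: real)"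
        by (auto simp: indicator_def)
    qed
    note eq = this
    show "measure_pmf.expectation (map_pmf (\<lambda>l. c # l) (traj K c' m)) (indicator {l. \<forall>t<Suc m. g (l!t) < x})
        = (if g c < x then 1 else 0) * (measure_pmf.expectation (traj K c' m) (indicator {l. \<forall>t<m. g (l!t) < x}) :: real)"
      apply (rule trans[OF integral_map_pmf]) apply (simp only: eq) by (rule integral_mult_right_zero)
  qed
  also have "\<dots> = surv K g x (Suc m) c"
    using Suc by simp
  finally show ?case .
qed

lemma set_traj_length: "l \<in> set_pmf (traj K c m) \<Longrightarrow> length l = Suc m"
  by (induction m arbitrary: c l) auto

lemma surv_sum:
  fixes H :: "config \<Rightarrow> real"
  assumes inv: "Inv c"
    and inv_step: "\<And>c c'. Inv c \<Longrightarrow> c' \<in> set_pmf (K c) \<Longrightarrow> Inv c'"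
    and Hnn: "\<And>c. Inv c \<Longrightarrow> g c < x \<Longrightarrow> 0 \<le> H c"
    and fin: "\<And>c. Inv c \<Longrightarrow> finite (set_pmf (K c))"
    and drift: "\<And>c. Inv c \<Longrightarrow> g c < x \<Longrightarrow>
        1 + measure_pmf.expectation (K c) (\<lambda>c'. if g c' < x then H c' else 0) \<le> H c"
  shows "(\<Sum>j<m. surv K g x (Suc j) c) \<le> (if g c < x then H c else 0)"
  using inv
proof (induction m arbitrary: c)
  case 0 then show ?case using Hnn by simp
next
  case (Suc m)
  show ?case
  proof (cases "g c < x")
    case False then show ?thesis by simp
  next
    case True
    have fi: "finite (set_pmf (K c))" using fin Suc by auto
    have "(\<Sum>j<Suc m. surv K g x (Suc j) c) = (\<Sum>j<Suc m. measure_pmf.expectation (K c) (surv K g x j))"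
      using True by simp
    also have "\<dots> = measure_pmf.expectation (K c) (\<lambda>c'. \<Sum>j<Suc m. surv K g x j c')"
      by (rule Bochner_Integration.integral_sum[symmetric]) (auto intro: integrable_measure_pmf_finite[OF fi])
    also have "\<dots> = measure_pmf.expectation (K c) (\<lambda>c'. 1 + (\<Sum>j<m. surv K g x (Suc j) c'))"
      by (subst sum.lessThan_Suc_shift) simp
    also have "\<dots> \<le> measure_pmf.expectation (K c) (\<lambda>c'. 1 + (if g c' < x then H c' else 0))"
      apply (rule integral_mono_AE)
        apply (auto intro: integrable_measure_pmf_finite[OF fi] simp: AE_measure_pmf_iff)
      using Suc.IH inv_step Suc.prems by fastforce+
    also have "\<dots> = 1 + measure_pmf.expectation (K c) (\<lambda>c'. if g c' < x then H c' else 0)"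
      by (subst Bochner_Integration.integral_add) (auto intro: integrable_measure_pmf_finite[OF fi])
    also have "\<dots> \<le> H c" using drift Suc.prems True by blast
    finally show ?thesis using True by simp
  qed
qed



lemma exp_le_quad: fixes z :: real assumes "\<bar>z\<bar> \<le> 1" shows "exp z \<le> 1 + z + z^2"
proof (cases "z \<ge> 0")
  case True then show ?thesis using exp_bound[of z] assms by auto
next
  case False
  define y where "y = -z"
  have y: "0 < y" "y \<le> 1" using False assms y_def by auto
  have "(1 - y + y^2) * (1 + y) = 1 + y^3" by (simp add: algebra_simps power2_eq_square power3_eq_cube)
  also have "\<dots> \<ge> 1" using y by simp
  finally have h1: "1 \<le> (1 - y + y^2) * (1 + y)" .
  have "0 < y^2" using y by simp
  then have pos: "0 < 1 - y + y^2" using y by linarith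
  have "(1 - y + y^2) * (1 + y) \<le> (1 - y + y^2) * exp y"
    using exp_ge_add_one_self[of y] pos by (intro mult_left_mono) auto
  with h1 have "1 \<le> (1 - y + y^2) * exp y" by linarith
  then have "exp (-y) \<le> 1 - y + y^2"
    by (simp add: exp_minus field_simps)
  then show ?thesis using y_def by simp
qed

lemma Pi_pmf_insert_last:
  assumes "finite A" "v \<notin> A"
  shows "Pi_pmf (insert v A) d D = bind_pmf (Pi_pmf A d D) (\<lambda>f. map_pmf (\<lambda>y. f(v:=y)) (D v))"
  unfolding Pi_pmf_insert'[OF assms] map_pmf_def
  by (rule bind_commute_pmf)

lemma expect_Pi_insert:
  fixes F :: "config \<Rightarrow> real"
  assumes "finite A" "v \<notin> A" "\<And>f. \<bar>F f\<bar> \<le> B"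
  shows "measure_pmf.expectation (Pi_pmf (insert v A) d D) F =
    measure_pmf.expectation (Pi_pmf A d D) (\<lambda>f. measure_pmf.expectation (D v) (\<lambda>y. F (f(v:=y))))"
  unfolding Pi_pmf_insert_last[OF assms(1,2)]
  by (subst integral_bind_pmf_bounded[where B=B]) (use assms(3) in auto)

lemma expect_ind: "measure_pmf.expectation p (\<lambda>y. if y = i then 1 else 0 :: real) = pmf p i"
  by (subst integral_measure_pmf[where A="{i}"]) (auto split: if_splits)

lemma sum_pmf_le1: "finite I \<Longrightarrow> (\<Sum>i\<in>I. pmf p i) \<le> 1"
  using measure_measure_pmf_finite[of I p] measure_pmf.prob_le_1[of p I] by simp

definition Sdev :: "nat set \<Rightarrow> (nat \<Rightarrow> nat pmf) \<Rightarrow> config \<Rightarrow> nat \<Rightarrow> real" where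
  "Sdev A D f i = (\<Sum>v\<in>A. (if f v = i then 1 else 0) - pmf (D v) i)"

definition Nrm :: "nat set \<Rightarrow> (nat \<Rightarrow> nat pmf) \<Rightarrow> nat set \<Rightarrow> config \<Rightarrow> real" where
  "Nrm A D I f = (\<Sum>i\<in>I. (Sdev A D f i)^2)"

lemma Sdev_abs: "\<bar>Sdev A D f i\<bar> \<le> real (card A)"
proof -
  have "\<bar>Sdev A D f i\<bar> \<le> (\<Sum>v\<in>A. \<bar>(if f v = i then 1 else 0) - pmf (D v) i\<bar>)"
    unfolding Sdev_def by (rule sum_abs)
  also have "\<dots> \<le> (\<Sum>v\<in>A. 1)"
    by (intro sum_mono) (auto simp: pmf_le_1)
  finally show ?thesis by simp
qed

lemma Nrm_nonneg: "0 \<le> Nrm A D I f"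
  unfolding Nrm_def by (intro sum_nonneg) auto

lemma Nrm_bound: "Nrm A D I f \<le> real (card I) * real (card A)^2"
proof -
  have "Nrm A D I f \<le> (\<Sum>i\<in>I. real (card A)^2)"
    unfolding Nrm_def
  proof (intro sum_mono)
    fix i
    have "\<bar>Sdev A D f i\<bar>^2 \<le> real (card A)^2" by (rule power_mono[OF Sdev_abs abs_ge_zero])
    then show "(Sdev A D f i)^2 \<le> real (card A)^2" by simp
  qed
  then show ?thesis by simp
qed

lemma Sdev_upd:
  assumes "finite A" "v \<notin> A"
  shows "Sdev (insert v A) D (f(v:=y)) i = Sdev A D f i + ((if y = i then 1 else 0) - pmf (D v) i)"
proof -
  have "Sdev A D (f(v:=y)) i = Sdev A D f i"
    unfolding Sdev_def using assms by (intro sum.cong) auto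
  then show ?thesis unfolding Sdev_def using assms by (simp add: sum.insert)
qed



lemma ind_integrable: "integrable (measure_pmf p) (\<lambda>y. if y = i then 1 else 0 :: real)"
  by (rule pmf_integrable_bounded[where B=1]) auto

lemma expect_affine:
  assumes "finite I"
  shows "measure_pmf.expectation p (\<lambda>y. a + (\<Sum>i\<in>I. b i * (if y = i then 1 else 0))) =
         a + (\<Sum>i\<in>I. b i * pmf p i)"
proof -
  have "measure_pmf.expectation p (\<lambda>y. a + (\<Sum>i\<in>I. b i * (if y = i then 1 else 0))) =
        a + measure_pmf.expectation p (\<lambda>y. \<Sum>i\<in>I. b i * (if y = i then 1 else 0))"
    by (subst Bochner_Integration.integral_add)
       (auto intro!: Bochner_Integration.integrable_sum integrable_mult_right ind_integrable)
  also have "measure_pmf.expectation p (\<lambda>y. \<Sum>i\<in>I. b i * (if y = i then 1 else 0)) =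
        (\<Sum>i\<in>I. measure_pmf.expectation p (\<lambda>y. b i * (if y = i then 1 else 0)))"
    by (rule Bochner_Integration.integral_sum) (auto intro!: integrable_mult_right ind_integrable)
  also have "\<dots> = (\<Sum>i\<in>I. b i * pmf p i)"
    by (intro sum.cong refl) (simp add: expect_ind)
  finally show ?thesis .
qed

lemma W_sq:
  fixes s :: "nat \<Rightarrow> real" and y :: nat and I :: "nat set"
  assumes "finite I"
  shows "(\<Sum>i\<in>I. s i * (if y = i then 1 else 0))^2 = (\<Sum>i\<in>I. (s i)^2 * (if y = i then 1 else (0::real)))"
proof -
  have "\<And>t::nat\<Rightarrow>real. (\<Sum>i\<in>I. t i * (if y = i then 1 else 0)) = (if y \<in> I then t y else 0)"
    using assms by (simp add: if_distrib[of "\<lambda>z. _ * z"] sum.delta cong: if_cong)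
  then show ?thesis by simp
qed

lemma W_abs:
  fixes s :: "nat \<Rightarrow> real" and y :: nat and I :: "nat set"
  assumes "finite I" "\<And>i. \<bar>s i\<bar> \<le> M" "0 \<le> M"
  shows "\<bar>\<Sum>i\<in>I. s i * (if y = i then 1 else (0::real))\<bar> \<le> M"
proof -
  have "(\<Sum>i\<in>I. s i * (if y = i then 1 else 0)) = (if y \<in> I then s y else 0)"
    using assms by (simp add: if_distrib[of "\<lambda>z. _ * z"] sum.delta cong: if_cong)
  then show ?thesis using assms by auto
qed

lemma sbar_abs:
  assumes "finite I" "\<And>i. \<bar>s i\<bar> \<le> M" "0 \<le> M"
  shows "\<bar>\<Sum>i\<in>I. s i * pmf p i\<bar> \<le> M"
proof -
  have "\<bar>\<Sum>i\<in>I. s i * pmf p i\<bar> \<le> (\<Sum>i\<in>I. \<bar>s i * pmf p i\<bar>)" by (rule sum_abs)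
  also have "\<dots> \<le> (\<Sum>i\<in>I. M * pmf p i)"
    using assms by (intro sum_mono) (auto simp: abs_mult intro!: mult_right_mono)
  also have "\<dots> = M * (\<Sum>i\<in>I. pmf p i)" by (simp add: sum_distrib_left)
  also have "\<dots> \<le> M * 1" using assms sum_pmf_le1[OF assms(1), of p] by (intro mult_left_mono) auto
  finally show ?thesis by simp
qed

lemma sq_expand:
  fixes s :: "nat \<Rightarrow> real" and y :: nat and I :: "nat set"
  assumes "finite I"
  shows "(\<Sum>i\<in>I. (s i + ((if y = i then 1 else 0) - pmf p i))^2) =
     (\<Sum>i\<in>I. (s i)^2) + 2 * ((\<Sum>i\<in>I. s i * (if y = i then 1 else 0)) - (\<Sum>i\<in>I. s i * pmf p i))
     + (\<Sum>i\<in>I. (if y = i then 1 else 0) * (1 - 2 * pmf p i) + (pmf p i)^2)"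
proof -
  have "\<And>i. (s i + ((if y = i then 1 else 0) - pmf p i))^2 = (s i)^2 + 2 * (s i * (if y = i then 1 else 0) - s i * pmf p i)
       + ((if y = i then 1 else 0) * (1 - 2 * pmf p i) + (pmf p i)^2)"
    by (auto simp: power2_eq_square algebra_simps)
  then show ?thesis
    by (simp add: sum.distrib sum_subtractf sum_distrib_left[symmetric])
qed

lemma R_le2:
  fixes y :: nat and I :: "nat set"
  assumes "finite I"
  shows "(\<Sum>i\<in>I. (if y = i then 1 else 0) * (1 - 2 * pmf p i) + (pmf p i)^2) \<le> (2::real)"
proof -
  have "(\<Sum>i\<in>I. (if y = i then 1 else 0) * (1 - 2 * pmf p i) + (pmf p i)^2) \<le>
        (\<Sum>i\<in>I. (if y = i then 1 else 0) + pmf p i)"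
  proof (intro sum_mono)
    fix i
    have "(pmf p i)^2 \<le> pmf p i" using pmf_le_1[of p i] pmf_nonneg[of p i]
      by (simp add: power2_eq_square mult_left_le)
    note h = this pmf_nonneg[of p i]
    show "(if y = i then 1 else 0) * (1 - 2 * pmf p i) + (pmf p i)^2 \<le> (if y = i then 1 else 0) + pmf p i"
    proof (cases "y = i")
      case True then show ?thesis using h by simp (use pmf_nonneg[of p i] in linarith)
    next
      case False then show ?thesis using h by simp
    qed
  qed
  also have "\<dots> = (if y \<in> I then 1 else 0) + (\<Sum>i\<in>I. pmf p i)"
    using assms by (simp add: sum.distrib sum.delta)
  also have "\<dots> \<le> 2" using sum_pmf_le1[OF assms, of p] by auto
  finally show ?thesis .
qed



lemma inner_mom2:
  fixes s :: "nat \<Rightarrow> real" and I :: "nat set"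
  assumes I: "finite I"
  shows "measure_pmf.expectation p (\<lambda>y. \<Sum>i\<in>I. (s i + ((if y = i then 1 else 0) - pmf p i))^2)
       = (\<Sum>i\<in>I. (s i)^2) + (\<Sum>i\<in>I. pmf p i * (1 - pmf p i))"
proof -
  define N where "N = (\<Sum>i\<in>I. (s i)^2)"
  define sb where "sb = (\<Sum>i\<in>I. s i * pmf p i)"
  define Q2 where "Q2 = (\<Sum>i\<in>I. (pmf p i)^2)"
  have pw: "\<And>y. (\<Sum>i\<in>I. (s i + ((if y = i then 1 else 0) - pmf p i))^2) =
     (N - 2 * sb + Q2) + (\<Sum>i\<in>I. (2 * s i + 1 - 2 * pmf p i) * (if y = i then 1 else 0))"
  proof -
    fix y
    have "(\<Sum>i\<in>I. (2 * s i + 1 - 2 * pmf p i) * (if y = i then 1 else 0)) =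
          2 * (\<Sum>i\<in>I. s i * (if y = i then 1 else 0)) + (\<Sum>i\<in>I. (if y = i then 1 else 0) * (1 - 2 * pmf p i))"
      unfolding sum_distrib_left sum.distrib[symmetric] by (intro sum.cong refl) (simp add: algebra_simps)
    moreover have "(\<Sum>i\<in>I. (if y = i then 1 else 0) * (1 - 2 * pmf p i) + (pmf p i)^2) =
        (\<Sum>i\<in>I. (if y = i then 1 else 0) * (1 - 2 * pmf p i)) + Q2"
      by (simp add: Q2_def sum.distrib)
    ultimately show "?thesis y"
      unfolding sq_expand[OF I] N_def[symmetric] sb_def[symmetric] by simp
  qed
  have "measure_pmf.expectation p (\<lambda>y. \<Sum>i\<in>I. (s i + ((if y = i then 1 else 0) - pmf p i))^2)
      = (N - 2 * sb + Q2) + (\<Sum>i\<in>I. (2 * s i + 1 - 2 * pmf p i) * pmf p i)"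
    unfolding pw by (rule expect_affine[OF I])
  also have "(\<Sum>i\<in>I. (2 * s i + 1 - 2 * pmf p i) * pmf p i) = 2 * sb + (\<Sum>i\<in>I. pmf p i) - 2 * Q2"
    unfolding sb_def Q2_def by (simp add: sum.distrib sum_subtractf sum_distrib_left algebra_simps power2_eq_square)
  also have "(\<Sum>i\<in>I. pmf p i * (1 - pmf p i)) = (\<Sum>i\<in>I. pmf p i) - Q2"
    unfolding Q2_def by (simp add: sum_subtractf algebra_simps power2_eq_square)
  ultimately show ?thesis unfolding N_def by simp
qed

lemma inner_mgf:
  fixes s :: "nat \<Rightarrow> real" and I :: "nat set"
  assumes I: "finite I" and sM: "\<And>i. \<bar>s i\<bar> \<le> M" and M: "0 \<le> M" and mu: "0 \<le> \<mu>" "4 * M * \<mu> \<le> 1"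
  shows "measure_pmf.expectation p (\<lambda>y. exp (\<mu> * (\<Sum>i\<in>I. (s i + ((if y = i then 1 else 0) - pmf p i))^2)))
       \<le> exp (2 * \<mu>) * exp ((\<mu> + 4 * \<mu>^2) * (\<Sum>i\<in>I. (s i)^2))"
proof -
  define N where "N = (\<Sum>i\<in>I. (s i)^2)"
  define sb where "sb = (\<Sum>i\<in>I. s i * pmf p i)"
  define W where "W = (\<lambda>y. \<Sum>i\<in>I. s i * (if y = i then 1 else (0::real)))"
  define R where "R = (\<lambda>y. \<Sum>i\<in>I. (if y = i then 1 else 0) * (1 - 2 * pmf p i) + (pmf p i)^2)"
  define Q where "Q = (\<Sum>i\<in>I. (s i)^2 * pmf p i)"
  define K where "K = exp (\<mu> * N + 2 * \<mu>)"
  have dec: "\<And>y. (\<Sum>i\<in>I. (s i + ((if y = i then 1 else 0) - pmf p i))^2) = N + 2 * (W y - sb) + R y"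
    unfolding N_def W_def sb_def R_def by (rule sq_expand[OF I])
  have Rle: "\<And>y. R y \<le> 2" unfolding R_def by (rule R_le2[OF I])
  have Wa: "\<And>y. \<bar>W y\<bar> \<le> M" unfolding W_def by (rule W_abs[OF I sM M])
  have sba: "\<bar>sb\<bar> \<le> M" unfolding sb_def by (rule sbar_abs[OF I sM M])
  have Wsq: "\<And>y. (W y)^2 = (\<Sum>i\<in>I. (s i)^2 * (if y = i then 1 else 0))"
    unfolding W_def by (rule W_sq[OF I])
  define G where "G = (\<lambda>y. K * (1 - 2 * \<mu> * sb + 4 * \<mu>^2 * sb^2) +
      (\<Sum>i\<in>I. K * (2 * \<mu> * s i + 4 * \<mu>^2 * (s i)^2 - 8 * \<mu>^2 * sb * s i) * (if y = i then 1 else 0)))"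
  have pw: "exp (\<mu> * (N + 2 * (W y - sb) + R y)) \<le> G y" for y
  proof -
    have "\<mu> * (N + 2 * (W y - sb) + R y) \<le> (\<mu> * N + 2 * \<mu>) + 2 * \<mu> * (W y - sb)"
      using Rle[of y] mu by (simp add: algebra_simps mult_left_mono)
    then have "exp (\<mu> * (N + 2 * (W y - sb) + R y)) \<le> K * exp (2 * \<mu> * (W y - sb))"
      unfolding K_def by (simp add: exp_add[symmetric])
    also have "exp (2 * \<mu> * (W y - sb)) \<le> 1 + 2 * \<mu> * (W y - sb) + (2 * \<mu> * (W y - sb))^2"
    proof (rule exp_le_quad)
      have "\<bar>W y - sb\<bar> \<le> 2 * M" using Wa[of y] sba by linarith
      then have "\<mu> * \<bar>W y - sb\<bar> \<le> \<mu> * (2 * M)"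
        using mu by (intro mult_left_mono) auto
      moreover have "\<bar>2 * \<mu> * (W y - sb)\<bar> = 2 * (\<mu> * \<bar>W y - sb\<bar>)"
        using mu by (simp add: abs_mult)
      ultimately have "\<bar>2 * \<mu> * (W y - sb)\<bar> \<le> 2 * \<mu> * (2 * M)" by (simp add: algebra_simps)
      moreover have "2 * \<mu> * (2 * M) = 4 * M * \<mu>" by simp
      ultimately show "\<bar>2 * \<mu> * (W y - sb)\<bar> \<le> 1" using mu by linarith
    qed
    then have "K * exp (2 * \<mu> * (W y - sb)) \<le> K * (1 + 2 * \<mu> * (W y - sb) + (2 * \<mu> * (W y - sb))^2)"
      unfolding K_def by (intro mult_left_mono) auto
    also have "\<dots> = G y"
    proof -
      have "(\<Sum>i\<in>I. K * (2 * \<mu> * s i + 4 * \<mu>^2 * (s i)^2 - 8 * \<mu>^2 * sb * s i) * (if y = i then 1 else 0))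
          = K * (2 * \<mu> * W y + 4 * \<mu>^2 * (\<Sum>i\<in>I. (s i)^2 * (if y = i then 1 else 0)) - 8 * \<mu>^2 * sb * W y)"
        unfolding W_def by (simp add: sum.distrib sum_subtractf sum_distrib_left algebra_simps)
      then show ?thesis unfolding G_def Wsq[symmetric] by (simp add: power2_eq_square algebra_simps)
    qed
    finally show ?thesis .
  qed
  have intL: "integrable (measure_pmf p) (\<lambda>y. exp (\<mu> * (N + 2 * (W y - sb) + R y)))"
  proof (rule pmf_integrable_bounded[where B="exp (\<mu> * (N + 4 * M + 2))"])
    fix y
    have "N + 2 * (W y - sb) + R y \<le> N + 4 * M + 2" using Wa[of y] sba Rle[of y] unfolding abs_le_iff by (simp add: algebra_simps)
    then have "\<mu> * (N + 2 * (W y - sb) + R y) \<le> \<mu> * (N + 4 * M + 2)" using mu by (intro mult_left_mono) auto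
    then show "\<bar>exp (\<mu> * (N + 2 * (W y - sb) + R y))\<bar> \<le> exp (\<mu> * (N + 4 * M + 2))" by simp
  qed
  have intG: "integrable (measure_pmf p) G"
    unfolding G_def
    by (auto intro!: Bochner_Integration.integrable_add Bochner_Integration.integrable_sum integrable_mult_right ind_integrable)
  have "measure_pmf.expectation p (\<lambda>y. exp (\<mu> * (\<Sum>i\<in>I. (s i + ((if y = i then 1 else 0) - pmf p i))^2)))
      = measure_pmf.expectation p (\<lambda>y. exp (\<mu> * (N + 2 * (W y - sb) + R y)))"
    unfolding dec ..
  also have "\<dots> \<le> measure_pmf.expectation p G"
    by (rule integral_mono[OF intL intG pw])
  also have "measure_pmf.expectation p G = K * (1 - 2 * \<mu> * sb + 4 * \<mu>^2 * sb^2) +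
      (\<Sum>i\<in>I. K * (2 * \<mu> * s i + 4 * \<mu>^2 * (s i)^2 - 8 * \<mu>^2 * sb * s i) * pmf p i)"
    unfolding G_def by (rule expect_affine[OF I])
  also have "(\<Sum>i\<in>I. K * (2 * \<mu> * s i + 4 * \<mu>^2 * (s i)^2 - 8 * \<mu>^2 * sb * s i) * pmf p i)
      = K * (2 * \<mu> * sb + 4 * \<mu>^2 * Q - 8 * \<mu>^2 * sb * sb)"
    unfolding sb_def Q_def by (simp add: sum.distrib sum_subtractf sum_distrib_left algebra_simps)
  also have "K * (1 - 2 * \<mu> * sb + 4 * \<mu>^2 * sb^2) + K * (2 * \<mu> * sb + 4 * \<mu>^2 * Q - 8 * \<mu>^2 * sb * sb)
      = K * (1 + 4 * \<mu>^2 * Q - 4 * \<mu>^2 * sb^2)"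
    by (simp add: algebra_simps power2_eq_square)
  also have "\<dots> \<le> K * (1 + 4 * \<mu>^2 * N)"
  proof -
    have "Q \<le> N" unfolding Q_def N_def
      by (intro sum_mono) (simp add: mult_left_le pmf_le_1)
    then have "4 * \<mu>^2 * Q \<le> 4 * \<mu>^2 * N" by (intro mult_left_mono) auto
    moreover have "0 \<le> 4 * \<mu>^2 * sb^2" by simp
    ultimately have "4 * \<mu>^2 * Q - 4 * \<mu>^2 * sb^2 \<le> 4 * \<mu>^2 * N" by linarith
    then show ?thesis unfolding K_def by (intro mult_left_mono) auto
  qed
  also have "\<dots> \<le> K * exp (4 * \<mu>^2 * N)"
    unfolding K_def by (intro mult_left_mono) (auto simp: exp_ge_add_one_self)
  also have "\<dots> = exp (2 * \<mu>) * exp ((\<mu> + 4 * \<mu>^2) * N)"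
    unfolding K_def by (simp add: exp_add[symmetric] algebra_simps)
  finally show ?thesis unfolding N_def .
qed



lemma Nrm_abs: "\<bar>Nrm A D I f\<bar> \<le> real (card I) * real (card A)^2"
  using Nrm_nonneg[of A D I f] Nrm_bound[of A D I f] by simp

lemma Nrm_upd:
  assumes "finite A" "v \<notin> A"
  shows "Nrm (insert v A) D I (f(v:=y)) =
    (\<Sum>i\<in>I. (Sdev A D f i + ((if y = i then 1 else 0) - pmf (D v) i))^2)"
  unfolding Nrm_def Sdev_upd[OF assms] ..

lemma mom2_Pi:
  assumes "finite A" "finite I"
  shows "measure_pmf.expectation (Pi_pmf A d D) (Nrm A D I) =
     (\<Sum>v\<in>A. \<Sum>i\<in>I. pmf (D v) i * (1 - pmf (D v) i))"
  using assms(1)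
proof (induction A rule: finite_induct)
  case empty
  then show ?case by (simp add: Nrm_def Sdev_def)
next
  case (insert v A)
  have "measure_pmf.expectation (Pi_pmf (insert v A) d D) (Nrm (insert v A) D I) =
    measure_pmf.expectation (Pi_pmf A d D) (\<lambda>f. measure_pmf.expectation (D v) (\<lambda>y. Nrm (insert v A) D I (f(v:=y))))"
    by (rule expect_Pi_insert[OF insert(1,2) Nrm_abs])
  also have "\<dots> = measure_pmf.expectation (Pi_pmf A d D) (\<lambda>f. Nrm A D I f + (\<Sum>i\<in>I. pmf (D v) i * (1 - pmf (D v) i)))"
    apply (simp only: Nrm_upd[OF insert(1,2)])
    apply (simp only: inner_mom2[OF assms(2)])
    apply (simp only: Nrm_def)
    done
  also have "\<dots> = measure_pmf.expectation (Pi_pmf A d D) (Nrm A D I) + (\<Sum>i\<in>I. pmf (D v) i * (1 - pmf (D v) i))"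
    by (subst Bochner_Integration.integral_add) (auto intro: pmf_integrable_bounded[OF Nrm_abs])
  finally show ?case using insert by (simp add: add.commute)
qed

lemma mgf_Pi:
  assumes "finite A" "finite I" "0 \<le> \<mu>" "8 * real (card A) * \<mu> \<le> 1"
  shows "measure_pmf.expectation (Pi_pmf A d D) (\<lambda>f. exp (\<mu> * Nrm A D I f)) \<le> exp (4 * real (card A) * \<mu>)"
  using assms(1,3,4)
proof (induction A arbitrary: \<mu> rule: finite_induct)
  case empty
  then show ?case by (simp add: Nrm_def Sdev_def)
next
  case (insert v A)
  define m where "m = real (card A)"
  have cm: "real (card (insert v A)) = m + 1" using insert(1,2) m_def by simp
  have h8: "8 * (m + 1) * \<mu> \<le> 1" using insert(5) cm by simp
  have mu0: "0 \<le> \<mu>" by fact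
  have m0: "0 \<le> m" unfolding m_def by simp
  define \<mu>' where "\<mu>' = \<mu> + 4 * \<mu>^2"
  have a1: "8 * m * \<mu> \<le> 1" using h8 mu0 m0 by (simp add: algebra_simps)
  have "32 * m * \<mu>^2 = 4 * \<mu> * (8 * m * \<mu>)" by (simp add: power2_eq_square algebra_simps)
  also have "\<dots> \<le> 4 * \<mu> * 1" using a1 mu0 by (intro mult_left_mono) auto
  finally have a2: "32 * m * \<mu>^2 \<le> 4 * \<mu>" by simp
  have mu'0: "0 \<le> \<mu>'" unfolding \<mu>'_def using mu0 by simp
  have "8 * m * \<mu>' = 8 * m * \<mu> + 32 * m * \<mu>^2" unfolding \<mu>'_def by (simp add: algebra_simps)
  also have "\<dots> \<le> 8 * m * \<mu> + 4 * \<mu>" using a2 by simp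
  also have "\<dots> \<le> 8 * m * \<mu> + 8 * \<mu>" using mu0 by simp
  also have "\<dots> = 8 * (m + 1) * \<mu>" by (simp add: algebra_simps)
  finally have mu'8: "8 * m * \<mu>' \<le> 1" using h8 by simp
  have a3: "4 * m * \<mu> \<le> 1" using a1 mu0 m0 by (simp add: algebra_simps)
  have bnd: "\<bar>exp (\<mu> * Nrm B D I f)\<bar> \<le> exp (\<mu> * (real (card I) * real (card B)^2))" for B f
    using Nrm_bound[of B D I f] mu0 by (simp add: mult_left_mono)
  have "measure_pmf.expectation (Pi_pmf (insert v A) d D) (\<lambda>f. exp (\<mu> * Nrm (insert v A) D I f)) =
    measure_pmf.expectation (Pi_pmf A d D) (\<lambda>f. measure_pmf.expectation (D v) (\<lambda>y. exp (\<mu> * Nrm (insert v A) D I (f(v:=y)))))"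
    by (rule expect_Pi_insert[OF insert(1,2) bnd])
  also have "\<dots> \<le> measure_pmf.expectation (Pi_pmf A d D) (\<lambda>f. exp (2 * \<mu>) * exp (\<mu>' * Nrm A D I f))"
  proof (rule integral_mono)
    show "integrable (measure_pmf (Pi_pmf A d D)) (\<lambda>f. measure_pmf.expectation (D v) (\<lambda>y. exp (\<mu> * Nrm (insert v A) D I (f(v:=y)))))"
    proof (rule pmf_integrable_bounded[where B="exp (\<mu> * (real (card I) * real (card (insert v A))^2))"])
      fix f
      have "measure_pmf.expectation (D v) (\<lambda>y. exp (\<mu> * Nrm (insert v A) D I (f(v:=y)))) \<le>
            measure_pmf.expectation (D v) (\<lambda>y. exp (\<mu> * (real (card I) * real (card (insert v A))^2)))"
        by (rule integral_mono[OF pmf_integrable_bounded[OF bnd]]) (use bnd in auto)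
      moreover have "0 \<le> measure_pmf.expectation (D v) (\<lambda>y. exp (\<mu> * Nrm (insert v A) D I (f(v:=y))))"
        by (rule integral_nonneg_AE) auto
      ultimately show "\<bar>measure_pmf.expectation (D v) (\<lambda>y. exp (\<mu> * Nrm (insert v A) D I (f(v:=y))))\<bar>
          \<le> exp (\<mu> * (real (card I) * real (card (insert v A))^2))" by simp
    qed
    show "integrable (measure_pmf (Pi_pmf A d D)) (\<lambda>f. exp (2 * \<mu>) * exp (\<mu>' * Nrm A D I f))"
    proof (intro integrable_mult_right pmf_integrable_bounded)
      fix f
      show "\<bar>exp (\<mu>' * Nrm A D I f)\<bar> \<le> exp (\<mu>' * (real (card I) * real (card A)^2))"
        using Nrm_bound[of A D I f] mu'0 by (simp add: mult_left_mono)
    qed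
    fix f
    show "measure_pmf.expectation (D v) (\<lambda>y. exp (\<mu> * Nrm (insert v A) D I (f(v:=y)))) \<le> exp (2 * \<mu>) * exp (\<mu>' * Nrm A D I f)"
      apply (simp only: Nrm_upd[OF insert(1,2)])
      unfolding \<mu>'_def Nrm_def
      by (rule inner_mgf[OF assms(2) _ m0 mu0]) (use Sdev_abs m_def a3 in auto)
  qed
  also have "\<dots> = exp (2 * \<mu>) * measure_pmf.expectation (Pi_pmf A d D) (\<lambda>f. exp (\<mu>' * Nrm A D I f))"
    by simp
  also have "\<dots> \<le> exp (2 * \<mu>) * exp (4 * m * \<mu>')"
    using insert(3)[OF mu'0] mu'8 m_def by (intro mult_left_mono) auto
  also have "\<dots> \<le> exp (4 * real (card (insert v A)) * \<mu>)"
  proof -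
    have "16 * m * \<mu>^2 = 2 * \<mu> * (8 * m * \<mu>)" by (simp add: power2_eq_square algebra_simps)
    also have "\<dots> \<le> 2 * \<mu> * 1" using a1 mu0 by (intro mult_left_mono) auto
    finally have "16 * m * \<mu>^2 \<le> 2 * \<mu>" by simp
    have "2 * \<mu> + 4 * m * \<mu>' = 4 * m * \<mu> + 2 * \<mu> + 16 * m * \<mu>^2" unfolding \<mu>'_def by (simp add: algebra_simps)
    also have "\<dots> \<le> 4 * m * \<mu> + 2 * \<mu> + 2 * \<mu>" using \<open>16 * m * \<mu>^2 \<le> 2 * \<mu>\<close> by simp
    also have "\<dots> = 4 * (m + 1) * \<mu>" by (simp add: algebra_simps)
    finally have "2 * \<mu> + 4 * m * \<mu>' \<le> 4 * (m + 1) * \<mu>" .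
    then show ?thesis unfolding cm by (simp add: exp_add[symmetric])
  qed
  finally show ?case .
qed

lemma tail_Pi:
  assumes "finite A" "finite I" "0 \<le> \<mu>" "8 * real (card A) * \<mu> \<le> 1"
  shows "measure_pmf.prob (Pi_pmf A d D) {f. s < Nrm A D I f} \<le> exp (4 * real (card A) * \<mu> - \<mu> * s)"
proof -
  have bnd: "\<bar>exp (\<mu> * Nrm A D I f)\<bar> \<le> exp (\<mu> * (real (card I) * real (card A)^2))" for f
    using Nrm_bound[of A D I f] assms(3) by (simp add: mult_left_mono)
  have "measure_pmf.prob (Pi_pmf A d D) {f. s < Nrm A D I f} =
        measure_pmf.expectation (Pi_pmf A d D) (indicator {f. s < Nrm A D I f})" by simp
  also have "\<dots> \<le> measure_pmf.expectation (Pi_pmf A d D) (\<lambda>f. exp (- \<mu> * s) * exp (\<mu> * Nrm A D I f))"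
  proof (rule integral_mono)
    show "integrable (measure_pmf (Pi_pmf A d D)) (indicat_real {f. s < Nrm A D I f})"
      by (rule pmf_integrable_bounded[where B=1]) (auto simp: indicator_def)
    show "integrable (measure_pmf (Pi_pmf A d D)) (\<lambda>f. exp (- \<mu> * s) * exp (\<mu> * Nrm A D I f))"
      by (intro integrable_mult_right pmf_integrable_bounded[OF bnd])
    fix f
    show "indicat_real {f. s < Nrm A D I f} f \<le> exp (- \<mu> * s) * exp (\<mu> * Nrm A D I f)"
    proof (cases "s < Nrm A D I f")
      case True
      then have "0 \<le> \<mu> * (Nrm A D I f - s)" using assms(3) by simp
      then have "1 \<le> exp (\<mu> * (Nrm A D I f - s))" by simp
      moreover have "exp (- \<mu> * s) * exp (\<mu> * Nrm A D I f) = exp (\<mu> * (Nrm A D I f - s))"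
        by (simp add: exp_add[symmetric] algebra_simps)
      ultimately show ?thesis using True by simp
    qed simp
  qed
  also have "\<dots> = exp (- \<mu> * s) * measure_pmf.expectation (Pi_pmf A d D) (\<lambda>f. exp (\<mu> * Nrm A D I f))" by simp
  also have "\<dots> \<le> exp (- \<mu> * s) * exp (4 * real (card A) * \<mu>)"
    by (intro mult_left_mono mgf_Pi assms) auto
  also have "\<dots> = exp (4 * real (card A) * \<mu> - \<mu> * s)" by (simp add: exp_add[symmetric])
  finally show ?thesis .
qed

lemma marg_Pi:
  assumes "finite A" "u \<in> A"
  shows "measure_pmf.expectation (Pi_pmf A d D) (\<lambda>f. if f u = i then 1 else 0 :: real) = pmf (D u) i"
proof -
  have "measure_pmf.expectation (Pi_pmf A d D) (\<lambda>f. if f u = i then 1 else 0 :: real) =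
        measure_pmf.expectation (map_pmf (\<lambda>f. f u) (Pi_pmf A d D)) (\<lambda>y. if y = i then 1 else 0 :: real)"
    by simp
  also have "\<dots> = pmf (D u) i" using assms by (simp add: Pi_pmf_component expect_ind)
  finally show ?thesis .
qed



definition valid :: "nat \<Rightarrow> nat \<Rightarrow> config \<Rightarrow> bool" where
  "valid n k c \<longleftrightarrow> (\<forall>u<n. c u \<in> {1..k})"

abbreviation ind :: "bool \<Rightarrow> real" where "ind P \<equiv> (if P then 1 else 0)"

lemma card_as_sum: fixes c :: config and n :: nat shows "real (card {v \<in> {0..<n}. c v = i}) = (\<Sum>v\<in>{0..<n}. ind (c v = i))"
proof -
  have "real (card {v \<in> {0..<n}. c v = i}) = (\<Sum>v\<in>{v \<in> {0..<n}. c v = i}. 1)" by simp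
  also have "\<dots> = (\<Sum>v\<in>{0..<n}. ind (c v = i))"
    by (rule sum.inter_filter) simp
  finally show ?thesis .
qed

lemma sum_group:
  assumes "valid n k c"
  shows "(\<Sum>w\<in>{0..<n}. h (c w)) = (\<Sum>j\<in>{1..k}. real (card {v \<in> {0..<n}. c v = j}) * (h j :: real))"
proof -
  have "(\<Sum>w\<in>{0..<n}. h (c w)) = (\<Sum>w\<in>{0..<n}. \<Sum>j\<in>{1..k}. ind (c w = j) * h j)"
  proof (intro sum.cong refl)
    fix w assume "w \<in> {0..<n}"
    then have "c w \<in> {1..k}" using assms unfolding valid_def by auto
    then show "h (c w) = (\<Sum>j\<in>{1..k}. ind (c w = j) * h j)"
      by (simp add: if_distrib[of "\<lambda>z. z * _"] sum.delta cong: if_cong)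
  qed
  also have "\<dots> = (\<Sum>j\<in>{1..k}. \<Sum>w\<in>{0..<n}. ind (c w = j) * h j)" by (rule sum.swap)
  also have "\<dots> = (\<Sum>j\<in>{1..k}. real (card {v \<in> {0..<n}. c v = j}) * h j)"
  proof (intro sum.cong refl)
    fix j
    show "(\<Sum>w\<in>{0..<n}. ind (c w = j) * h j) = real (card {v \<in> {0..<n}. c v = j}) * h j"
      unfolding card_as_sum by (simp add: sum_distrib_right)
  qed
  finally show ?thesis .
qed

lemma sum_alpha:
  assumes "valid n k c" "0 < n"
  shows "(\<Sum>j\<in>{1..k}. alpha n c j) = 1"
proof -
  have "(\<Sum>w\<in>{0..<n}. (1::real)) = (\<Sum>j\<in>{1..k}. real (card {v \<in> {0..<n}. c v = j}) * 1)"
    by (rule sum_group[OF assms(1)])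
  then have "(\<Sum>j\<in>{1..k}. real (card {v \<in> {0..<n}. c v = j})) = real n" by simp
  then show ?thesis using assms(2) unfolding alpha_def by (simp add: sum_divide_distrib[symmetric])
qed

lemma sum_group_alpha:
  assumes "valid n k c" "0 < n"
  shows "(\<Sum>w\<in>{0..<n}. h (c w)) = real n * (\<Sum>j\<in>{1..k}. alpha n c j * (h j :: real))"
  using assms unfolding sum_group[OF assms(1)] alpha_def
  by (simp add: sum_distrib_left)

lemma alpha_nonneg: "0 \<le> alpha n c i" unfolding alpha_def by simp

lemma alpha_le1: "alpha n c i \<le> 1"
proof (cases "n = 0")
  case False
  have "card {v \<in> {0..<n}. c v = i} \<le> card {0..<n}" by (intro card_mono) auto
  then show ?thesis using False unfolding alpha_def by simp
qed (simp add: alpha_def)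

lemma gamma_nonneg: "0 \<le> gamma n k c" unfolding gamma_def by (intro sum_nonneg) auto

lemma gamma_le_sum_alpha: "gamma n k c \<le> (\<Sum>j\<in>{1..k}. alpha n c j)"
  unfolding gamma_def
  by (intro sum_mono) (simp add: power2_eq_square mult_left_le alpha_le1 alpha_nonneg)

lemma sum_alpha_le1: "(\<Sum>j\<in>{1..k}. alpha n c j) \<le> 1"
proof (cases "n = 0")
  case False
  have "(\<Sum>j\<in>{1..k}. alpha n c j) = (\<Sum>v\<in>{0..<n}. \<Sum>j\<in>{1..k}. ind (c v = j)) / real n"
    unfolding alpha_def card_as_sum by (subst sum.swap) (simp add: sum_divide_distrib)
  also have "\<dots> \<le> (\<Sum>v\<in>{0..<n}. 1) / real n"
    by (intro divide_right_mono sum_mono) (auto simp: sum.delta)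
  finally show ?thesis using False by simp
qed (simp add: alpha_def)

lemma gamma_le1: "gamma n k c \<le> 1"
  using gamma_le_sum_alpha sum_alpha_le1 order_trans by blast

lemma gamma_ge_inv_n:
  assumes "valid n k c" "0 < n"
  shows "1 / real n \<le> gamma n k c"
proof -
  have "(\<Sum>j\<in>{1..k}. alpha n c j * (1 / real n)) \<le> (\<Sum>j\<in>{1..k}. alpha n c j * alpha n c j)"
  proof (intro sum_mono)
    fix j
    show "alpha n c j * (1 / real n) \<le> alpha n c j * alpha n c j"
    proof (cases "card {v \<in> {0..<n}. c v = j} = 0")
      case True
      then show ?thesis unfolding alpha_def True by simp
    next
      case False
      then have "1 \<le> real (card {v \<in> {0..<n}. c v = j})" by linarith
      then have "1 / real n \<le> alpha n c j" unfolding alpha_def by (intro divide_right_mono) auto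
      then show ?thesis by (intro mult_left_mono alpha_nonneg)
    qed
  qed
  also have "\<dots> = gamma n k c" unfolding gamma_def by (simp add: power2_eq_square)
  finally show ?thesis using sum_alpha[OF assms] by (simp add: sum_divide_distrib[symmetric])
qed



definition Pv :: "(nat \<Rightarrow> nat pmf) \<Rightarrow> nat \<Rightarrow> nat \<Rightarrow> real" where
  "Pv D n i = (\<Sum>u\<in>{0..<n}. pmf (D u) i) / real n"

lemma alpha_decomp:
  assumes "0 < n"
  shows "alpha n f i = Pv D n i + Sdev {0..<n} D f i / real n"
proof -
  have "alpha n f i = (\<Sum>v\<in>{0..<n}. ind (f v = i)) / real n" unfolding alpha_def card_as_sum ..
  also have "(\<Sum>v\<in>{0..<n}. ind (f v = i)) = (\<Sum>u\<in>{0..<n}. pmf (D u) i) + Sdev {0..<n} D f i"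
    unfolding Sdev_def by (simp add: sum_subtractf)
  finally show ?thesis unfolding Pv_def by (simp add: add_divide_distrib)
qed

lemma gamma_expand:
  assumes "0 < n"
  shows "gamma n k f = (\<Sum>i\<in>{1..k}. (Pv D n i)^2) + 2 / real n * (\<Sum>i\<in>{1..k}. Pv D n i * Sdev {0..<n} D f i)
          + Nrm {0..<n} D {1..k} f / (real n)^2"
proof -
  have "gamma n k f = (\<Sum>i\<in>{1..k}. (Pv D n i + Sdev {0..<n} D f i / real n)^2)"
    unfolding gamma_def alpha_decomp[OF assms, where D=D] ..
  also have "\<dots> = (\<Sum>i\<in>{1..k}. (Pv D n i)^2 + 2 / real n * (Pv D n i * Sdev {0..<n} D f i)
         + (Sdev {0..<n} D f i)^2 / (real n)^2)"
    by (intro sum.cong refl) (simp add: power2_sum power_divide algebra_simps)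
  also have "\<dots> = (\<Sum>i\<in>{1..k}. (Pv D n i)^2) + 2 / real n * (\<Sum>i\<in>{1..k}. Pv D n i * Sdev {0..<n} D f i)
          + Nrm {0..<n} D {1..k} f / (real n)^2"
    unfolding Nrm_def by (simp add: sum.distrib sum_distrib_left sum_divide_distrib)
  finally show ?thesis .
qed

lemma gamma_upper:
  assumes "0 < n"
  shows "gamma n k f \<le> 2 * (\<Sum>i\<in>{1..k}. (Pv D n i)^2) + 2 * Nrm {0..<n} D {1..k} f / (real n)^2"
proof -
  have "gamma n k f = (\<Sum>i\<in>{1..k}. (Pv D n i + Sdev {0..<n} D f i / real n)^2)"
    unfolding gamma_def alpha_decomp[OF assms, where D=D] ..
  also have "\<dots> \<le> (\<Sum>i\<in>{1..k}. 2 * (Pv D n i)^2 + 2 * ((Sdev {0..<n} D f i)^2 / (real n)^2))"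
  proof (intro sum_mono)
    fix i
    have "\<And>a b::real. (a + b)^2 \<le> 2 * a^2 + 2 * b^2"
    proof -
      fix a b :: real
      have "0 \<le> (a - b)^2" by simp
      also have "(a - b)^2 = 2 * a^2 + 2 * b^2 - (a + b)^2" by (simp add: power2_eq_square algebra_simps)
      finally show "(a + b)^2 \<le> 2 * a^2 + 2 * b^2" by simp
    qed
    note sq = this
    show "(Pv D n i + Sdev {0..<n} D f i / real n)^2 \<le> 2 * (Pv D n i)^2 + 2 * ((Sdev {0..<n} D f i)^2 / (real n)^2)"
      using sq[of "Pv D n i" "Sdev {0..<n} D f i / real n"] by (simp add: power_divide)
  qed
  also have "\<dots> = 2 * (\<Sum>i\<in>{1..k}. (Pv D n i)^2) + 2 * Nrm {0..<n} D {1..k} f / (real n)^2"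
    unfolding Nrm_def by (simp add: sum.distrib sum_distrib_left sum_divide_distrib)
  finally show ?thesis .
qed

lemma abs_ind_pmf: "\<bar>ind P - pmf p i\<bar> \<le> 1"
  using pmf_nonneg[of p i] pmf_le_1[of p i] by (cases P) (simp_all add: abs_le_iff)

lemma expect_Sdev:
  assumes "finite A"
  shows "measure_pmf.expectation (Pi_pmf A d D) (\<lambda>f. Sdev A D f i) = 0"
proof -
  have "measure_pmf.expectation (Pi_pmf A d D) (\<lambda>f. Sdev A D f i) =
        (\<Sum>v\<in>A. measure_pmf.expectation (Pi_pmf A d D) (\<lambda>f. ind (f v = i) - pmf (D v) i))"
    unfolding Sdev_def
    by (rule Bochner_Integration.integral_sum) (auto intro!: pmf_integrable_bounded[OF abs_ind_pmf])
  also have "\<dots> = (\<Sum>v\<in>A. 0)"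
  proof (intro sum.cong refl)
    fix v assume v: "v \<in> A"
    have "measure_pmf.expectation (Pi_pmf A d D) (\<lambda>f. ind (f v = i) - pmf (D v) i)
        = measure_pmf.expectation (Pi_pmf A d D) (\<lambda>f. ind (f v = i)) - pmf (D v) i"
      by (subst Bochner_Integration.integral_diff) (auto intro!: pmf_integrable_bounded[where B=1])
    then show "measure_pmf.expectation (Pi_pmf A d D) (\<lambda>f. ind (f v = i) - pmf (D v) i) = 0"
      using marg_Pi[OF assms v] by simp
  qed
  finally show ?thesis by simp
qed

lemma E_gamma:
  assumes "0 < n"
  shows "measure_pmf.expectation (Pi_pmf {0..<n} d D) (gamma n k) =
    (\<Sum>i\<in>{1..k}. (Pv D n i)^2) + (\<Sum>u\<in>{0..<n}. \<Sum>i\<in>{1..k}. pmf (D u) i * (1 - pmf (D u) i)) / (real n)^2"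
proof -
  let ?M = "Pi_pmf {0..<n} d D"
  have iS: "integrable (measure_pmf ?M) (\<lambda>f. Sdev {0..<n} D f i)" for i
    by (rule pmf_integrable_bounded[OF Sdev_abs])
  have iN: "integrable (measure_pmf ?M) (Nrm {0..<n} D {1..k})"
    by (rule pmf_integrable_bounded[OF Nrm_abs])
  have "measure_pmf.expectation ?M (gamma n k) = measure_pmf.expectation ?M (\<lambda>f.
      (\<Sum>i\<in>{1..k}. (Pv D n i)^2) + 2 / real n * (\<Sum>i\<in>{1..k}. Pv D n i * Sdev {0..<n} D f i)
          + Nrm {0..<n} D {1..k} f / (real n)^2)"
    unfolding gamma_expand[OF assms, where D=D] ..
  also have "\<dots> = (\<Sum>i\<in>{1..k}. (Pv D n i)^2) + 2 / real n * (\<Sum>i\<in>{1..k}. Pv D n i * measure_pmf.expectation ?M (\<lambda>f. Sdev {0..<n} D f i))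
          + measure_pmf.expectation ?M (Nrm {0..<n} D {1..k}) / (real n)^2"
    using iS iN
    by (simp add: Bochner_Integration.integral_add Bochner_Integration.integral_sum
         Bochner_Integration.integrable_sum integrable_mult_right)
  also have "\<dots> = (\<Sum>i\<in>{1..k}. (Pv D n i)^2) + (\<Sum>u\<in>{0..<n}. \<Sum>i\<in>{1..k}. pmf (D u) i * (1 - pmf (D u) i)) / (real n)^2"
    by (simp add: expect_Sdev mom2_Pi)
  finally show ?thesis .
qed

lemma drift_step:
  fixes M :: "config pmf" and g :: "config \<Rightarrow> real"
  assumes g01: "\<And>f. 0 \<le> g f" "\<And>f. g f \<le> 1"
    and Eg: "g0 + d \<le> measure_pmf.expectation M g"
    and tail: "measure_pmf.prob M {f. a < g f} \<le> d / 2"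
    and d: "0 < d" and xa: "x \<le> a" and a0: "0 \<le> a"
  shows "1 + measure_pmf.expectation M (\<lambda>f. if g f < x then 2 / d * (a - g f) else 0) \<le> 2 / d * (a - g0)"
proof -
  have ig: "integrable (measure_pmf M) g" by (rule pmf_integrable_bounded[where B=1]) (use g01 in auto)
  have ii: "integrable (measure_pmf M) (indicat_real {f. a < g f})"
    by (rule pmf_integrable_bounded[where B=1]) (auto simp: indicator_def)
  have "measure_pmf.expectation M (\<lambda>f. if g f < x then 2 / d * (a - g f) else 0)
      \<le> measure_pmf.expectation M (\<lambda>f. 2 / d * (a - g f + indicator {f. a < g f} f))"
  proof (rule integral_mono)
    show "integrable (measure_pmf M) (\<lambda>f. if g f < x then 2 / d * (a - g f) else 0)"
    proof (rule pmf_integrable_bounded[where B="2 / d * a"])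
      fix f
      show "\<bar>if g f < x then 2 / d * (a - g f) else 0\<bar> \<le> 2 / d * a"
      proof (cases "g f < x")
        case True
        then have "0 \<le> a - g f" "a - g f \<le> a" using g01[of f] xa by auto
        moreover have "0 \<le> 2 / d" using d by simp
        note hh = calculation this
        have "0 \<le> 2 / d * (a - g f)" by (rule mult_nonneg_nonneg) (use hh in auto)
        moreover have "2 / d * (a - g f) \<le> 2 / d * a" by (rule mult_left_mono) (use hh in auto)
        ultimately have "0 \<le> 2 / d * (a - g f)" "2 / d * (a - g f) \<le> 2 / d * a" by auto
        then show ?thesis using True by simp
      next
        case False then show ?thesis using d a0 by simp
      qed
    qed
    show "integrable (measure_pmf M) (\<lambda>f. 2 / d * (a - g f + indicat_real {f. a < g f} f))"
      using ig ii by (intro integrable_mult_right Bochner_Integration.integrable_add Bochner_Integration.integrable_diff) auto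
    fix f
    have "(if g f < x then a - g f else 0) \<le> a - g f + indicator {f. a < g f} f"
      using g01[of f] xa a0 by (auto simp: indicator_def)
    then show "(if g f < x then 2 / d * (a - g f) else 0) \<le> 2 / d * (a - g f + indicat_real {f. a < g f} f)"
    proof -
      have "2 / d * (if g f < x then a - g f else 0) \<le> 2 / d * (a - g f + indicat_real {f. a < g f} f)"
        by (rule mult_left_mono[OF \<open>(if g f < x then a - g f else 0) \<le> _\<close>]) (use d in simp)
      moreover have "(if g f < x then 2 / d * (a - g f) else 0) = 2 / d * (if g f < x then a - g f else 0)" by simp
      ultimately show ?thesis by simp
    qed
  qed
  also have "\<dots> = 2 / d * (a - measure_pmf.expectation M g + measure_pmf.prob M {f. a < g f})"
    using ig ii by (simp add: Bochner_Integration.integral_add Bochner_Integration.integral_diff)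
  also have "\<dots> \<le> 2 / d * (a - (g0 + d) + d / 2)"
    using Eg tail d by (intro mult_left_mono) auto
  also have "\<dots> = 2 / d * (a - g0) - 1" using d by (simp add: field_simps)
  finally show ?thesis by simp
qed



lemma sum_if_eq:
  fixes c :: config
  assumes "0 < n"
  shows "(\<Sum>w\<in>{0..<n}. if c w = z then A else B) / real n = alpha n c z * A + (1 - alpha n c z) * (B::real)"
proof -
  have "(\<Sum>w\<in>{0..<n}. if c w = z then A else B) = (\<Sum>w\<in>{0..<n}. ind (c w = z) * (A - B) + B)"
    by (intro sum.cong refl) auto
  also have "\<dots> = real (card {v \<in> {0..<n}. c v = z}) * (A - B) + real n * B"
    unfolding card_as_sum by (simp add: sum.distrib sum_distrib_right)
  finally show ?thesis using assms unfolding alpha_def by (simp add: field_simps)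
qed

lemma alpha_outside:
  assumes "valid n k c" "i \<notin> {1..k}"
  shows "alpha n c i = 0"
proof -
  have "{v \<in> {0..<n}. c v = i} = {}" using assms unfolding valid_def by auto
  then show ?thesis unfolding alpha_def by simp
qed

lemma pmf_3maj:
  assumes "valid n k c" "0 < n" "i \<in> {1..k}"
  shows "pmf (three_majority_vertex n c) i = (alpha n c i)^2 + (1 - gamma n k c) * alpha n c i"
proof -
  let ?V = "{0..<n}"
  have ne: "?V \<noteq> {}" "finite ?V" using assms(2) by auto
  have i3: "(\<Sum>w3\<in>?V. pmf (return_pmf (if c w1 = c w2 then c w1 else c w3)) i) / real n
           = (if c w1 = c w2 then ind (c w1 = i) else alpha n c i)" for w1 w2
  proof (cases "c w1 = c w2")
    case True then show ?thesis using assms(2) by (simp add: indicator_def)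
  next
    case False
    have "(\<Sum>w3\<in>?V. pmf (return_pmf (c w3)) i) = (\<Sum>w3\<in>?V. ind (c w3 = i))"
      by (intro sum.cong refl) (auto simp: indicator_def)
    then show ?thesis using False unfolding alpha_def card_as_sum by simp
  qed
  have i2: "(\<Sum>w2\<in>?V. (if c w1 = c w2 then ind (c w1 = i) else alpha n c i)) / real n
        = alpha n c (c w1) * ind (c w1 = i) + (1 - alpha n c (c w1)) * alpha n c i" for w1
  proof -
    have "(\<Sum>w2\<in>?V. (if c w1 = c w2 then ind (c w1 = i) else alpha n c i)) =
          (\<Sum>w2\<in>?V. (if c w2 = c w1 then ind (c w1 = i) else alpha n c i))"
      by (intro sum.cong refl) auto
    then show ?thesis using sum_if_eq[OF assms(2), of c "c w1" "ind (c w1 = i)" "alpha n c i"] by simp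
  qed
  have "pmf (three_majority_vertex n c) i =
     (\<Sum>w1\<in>?V. (\<Sum>w2\<in>?V. (\<Sum>w3\<in>?V. pmf (return_pmf (if c w1 = c w2 then c w1 else c w3)) i) / real n) / real n) / real n"
    unfolding three_majority_vertex_def using ne by (simp add: pmf_bind_pmf_of_set)
  also have "\<dots> = (\<Sum>w1\<in>?V. alpha n c (c w1) * ind (c w1 = i) + (1 - alpha n c (c w1)) * alpha n c i) / real n"
    by (simp only: i3 i2)
  also have "\<dots> = (\<Sum>j\<in>{1..k}. alpha n c j * (alpha n c j * ind (j = i) + (1 - alpha n c j) * alpha n c i))"
    using sum_group_alpha[OF assms(1,2), of "\<lambda>j. alpha n c j * ind (j = i) + (1 - alpha n c j) * alpha n c i"] assms(2)
    by simp
  also have "\<dots> = (\<Sum>j\<in>{1..k}. (alpha n c j)^2 * ind (j = i)) + alpha n c i * ((\<Sum>j\<in>{1..k}. alpha n c j) - gamma n k c)"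
    unfolding gamma_def
    by (simp add: sum.distrib sum_subtractf sum_distrib_left sum_distrib_right algebra_simps power2_eq_square)
  also have "\<dots> = (alpha n c i)^2 + (1 - gamma n k c) * alpha n c i"
    using assms sum_alpha[OF assms(1,2)] by (simp add: if_distrib[of "\<lambda>z. _ * z"] sum.delta' cong: if_cong)
  finally show ?thesis .
qed

lemma pmf_2ch:
  assumes "valid n k c" "0 < n" "i \<in> {1..k}"
  shows "pmf (two_choices_vertex n c v) i = (alpha n c i)^2 + ind (c v = i) * (1 - gamma n k c)"
proof -
  let ?V = "{0..<n}"
  have ne: "?V \<noteq> {}" "finite ?V" using assms(2) by auto
  have i2: "(\<Sum>w2\<in>?V. pmf (return_pmf (if c w1 = c w2 then c w1 else c v)) i) / real n
        = alpha n c (c w1) * ind (c w1 = i) + (1 - alpha n c (c w1)) * ind (c v = i)" for w1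
  proof -
    have "(\<Sum>w2\<in>?V. pmf (return_pmf (if c w1 = c w2 then c w1 else c v)) i) =
          (\<Sum>w2\<in>?V. (if c w2 = c w1 then ind (c w1 = i) else ind (c v = i)))"
      by (intro sum.cong refl) (auto simp: indicator_def)
    then show ?thesis using sum_if_eq[OF assms(2), of c "c w1" "ind (c w1 = i)" "ind (c v = i)"] by simp
  qed
  have "pmf (two_choices_vertex n c v) i =
     (\<Sum>w1\<in>?V. (\<Sum>w2\<in>?V. pmf (return_pmf (if c w1 = c w2 then c w1 else c v)) i) / real n) / real n"
    unfolding two_choices_vertex_def using ne by (simp add: pmf_bind_pmf_of_set)
  also have "\<dots> = (\<Sum>w1\<in>?V. alpha n c (c w1) * ind (c w1 = i) + (1 - alpha n c (c w1)) * ind (c v = i)) / real n"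
    by (simp only: i2)
  also have "\<dots> = (\<Sum>j\<in>{1..k}. alpha n c j * (alpha n c j * ind (j = i) + (1 - alpha n c j) * ind (c v = i)))"
    using sum_group_alpha[OF assms(1,2), of "\<lambda>j. alpha n c j * ind (j = i) + (1 - alpha n c j) * ind (c v = i)"] assms(2)
    by simp
  also have "\<dots> = (\<Sum>j\<in>{1..k}. (alpha n c j)^2 * ind (j = i)) + ind (c v = i) * ((\<Sum>j\<in>{1..k}. alpha n c j) - gamma n k c)"
    unfolding gamma_def
    by (simp add: sum.distrib sum_subtractf sum_distrib_left sum_distrib_right algebra_simps power2_eq_square)
  also have "\<dots> = (alpha n c i)^2 + ind (c v = i) * (1 - gamma n k c)"
    using assms sum_alpha[OF assms(1,2)] by (simp add: if_distrib[of "\<lambda>z. _ * z"] sum.delta' cong: if_cong)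
  finally show ?thesis .
qed



definition rr :: "nat \<Rightarrow> nat \<Rightarrow> config \<Rightarrow> nat \<Rightarrow> real" where
  "rr n k c i = (alpha n c i)^2 + (1 - gamma n k c) * alpha n c i"

lemma sum_rr:
  assumes "valid n k c" "0 < n"
  shows "(\<Sum>i\<in>{1..k}. rr n k c i) = 1"
  using sum_alpha[OF assms] unfolding rr_def gamma_def
  by (simp add: sum.distrib sum_distrib_left[symmetric])

lemma rr_nonneg: "0 \<le> rr n k c i"
  unfolding rr_def using gamma_le1[of n k c] alpha_nonneg[of n c i] by simp

lemma rr_le: "rr n k c i \<le> 2 * alpha n c i"
proof -
  have "(alpha n c i)^2 \<le> alpha n c i"
    using alpha_le1[of n c i] alpha_nonneg[of n c i] by (simp add: power2_eq_square mult_left_le)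
  moreover have "(1 - gamma n k c) * alpha n c i \<le> alpha n c i"
  proof -
    have "0 \<le> gamma n k c * alpha n c i" by (simp add: gamma_nonneg alpha_nonneg)
    then show ?thesis by (simp add: algebra_simps)
  qed
  ultimately show ?thesis unfolding rr_def by simp
qed

lemma sum_rr2_le: "(\<Sum>i\<in>{1..k}. (rr n k c i)^2) \<le> 4 * gamma n k c"
proof -
  have "(\<Sum>i\<in>{1..k}. (rr n k c i)^2) \<le> (\<Sum>i\<in>{1..k}. 4 * (alpha n c i)^2)"
  proof (intro sum_mono)
    fix i
    have "(rr n k c i)^2 \<le> (2 * alpha n c i)^2" by (rule power_mono[OF rr_le rr_nonneg])
    then show "(rr n k c i)^2 \<le> 4 * (alpha n c i)^2" by (simp add: power_mult_distrib)
  qed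
  then show ?thesis unfolding gamma_def by (simp add: sum_distrib_left)
qed

lemma sum_rr2_ge:
  assumes "valid n k c" "0 < n"
  shows "gamma n k c \<le> (\<Sum>i\<in>{1..k}. (rr n k c i)^2)"
proof -
  define g where "g = gamma n k c"
  have pw: "(alpha n c i)^2 + 2 * g * (alpha n c i)^2 - 2 * g^2 * alpha n c i \<le> (rr n k c i)^2" for i
  proof -
    define a where "a = alpha n c i"
    have "(rr n k c i)^2 - (a^2 + 2 * g * a^2 - 2 * g^2 * a) = 2 * a * (a - g)^2 + a^2 * (a - g)^2"
      unfolding rr_def a_def[symmetric] g_def[symmetric] by (simp add: power2_eq_square algebra_simps)
    moreover have "0 \<le> 2 * a * (a - g)^2 + a^2 * (a - g)^2" unfolding a_def using alpha_nonneg[of n c i] by simp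
    ultimately show ?thesis unfolding a_def by linarith
  qed
  have "(\<Sum>i\<in>{1..k}. (alpha n c i)^2 + 2 * g * (alpha n c i)^2 - 2 * g^2 * alpha n c i) = g + 2 * g * g - 2 * g^2 * 1"
    using sum_alpha[OF assms] unfolding g_def gamma_def
    by (simp add: sum.distrib sum_subtractf sum_distrib_left[symmetric])
  also have "\<dots> = g" by (simp add: power2_eq_square)
  finally have "g = (\<Sum>i\<in>{1..k}. (alpha n c i)^2 + 2 * g * (alpha n c i)^2 - 2 * g^2 * alpha n c i)" ..
  also have "\<dots> \<le> (\<Sum>i\<in>{1..k}. (rr n k c i)^2)" by (intro sum_mono pw)
  finally show ?thesis unfolding g_def .
qed



lemma drift_3maj:
  assumes v: "valid n k c" and n: "0 < n" and ge: "gamma n k c \<le> 1 - \<epsilon>"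
  shows "gamma n k c + \<epsilon> / real n \<le> measure_pmf.expectation (three_majority_step n c) (gamma n k)"
proof -
  define D where "D = (\<lambda>u::nat. three_majority_vertex n c)"
  define S where "S = (\<Sum>i\<in>{1..k}. (rr n k c i)^2)"
  have q: "pmf (D u) i = rr n k c i" if "i \<in> {1..k}" for u i
    unfolding D_def rr_def using pmf_3maj[OF v n that] .
  have Pv: "Pv D n i = rr n k c i" if "i \<in> {1..k}" for i
    unfolding Pv_def using q[OF that] n by simp
  have E: "measure_pmf.expectation (three_majority_step n c) (gamma n k) =
    (\<Sum>i\<in>{1..k}. (Pv D n i)^2) + (\<Sum>u\<in>{0..<n}. \<Sum>i\<in>{1..k}. pmf (D u) i * (1 - pmf (D u) i)) / (real n)^2"
    unfolding three_majority_step_def D_def by (rule E_gamma[OF n])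
  have s1: "(\<Sum>i\<in>{1..k}. (Pv D n i)^2) = S" unfolding S_def by (intro sum.cong refl) (simp add: Pv)
  have "(\<Sum>u\<in>{0..<n}. \<Sum>i\<in>{1..k}. pmf (D u) i * (1 - pmf (D u) i)) =
        (\<Sum>u\<in>{0..<n}. \<Sum>i\<in>{1..k}. rr n k c i * (1 - rr n k c i))"
    by (intro sum.cong refl) (simp add: q)
  also have "\<dots> = real n * (1 - S)"
    using sum_rr[OF v n] unfolding S_def
    by (simp add: sum_subtractf algebra_simps power2_eq_square)
  finally have s2: "(\<Sum>u\<in>{0..<n}. \<Sum>i\<in>{1..k}. pmf (D u) i * (1 - pmf (D u) i)) = real n * (1 - S)" .
  have E2: "measure_pmf.expectation (three_majority_step n c) (gamma n k) = S + (1 - S) / real n"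
    unfolding E s1 s2 using n by (simp add: power2_eq_square)
  have Sg: "gamma n k c \<le> S" unfolding S_def by (rule sum_rr2_ge[OF v n])
  have n1: "1 \<le> real n" using n by simp
  have "(real n - 1) * (S - gamma n k c) \<ge> 0" using Sg n1 by simp
  then have "real n * (gamma n k c) + \<epsilon> \<le> real n * S + (1 - S)" using ge by (simp add: algebra_simps)
  then have "(real n * (gamma n k c) + \<epsilon>) / real n \<le> (real n * S + (1 - S)) / real n"
    using n by (intro divide_right_mono) auto
  then show ?thesis unfolding E2 using n by (simp add: add_divide_distrib)
qed

lemma sum_sq_le_sq_sum:
  fixes x :: "nat \<Rightarrow> real"
  assumes "finite A" "\<And>i. i \<in> A \<Longrightarrow> 0 \<le> x i"
  shows "(\<Sum>i\<in>A. (x i)^2) \<le> (\<Sum>i\<in>A. x i)^2"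
proof -
  have "(\<Sum>i\<in>A. (x i)^2) \<le> (\<Sum>i\<in>A. x i * (\<Sum>j\<in>A. x j))"
  proof (intro sum_mono)
    fix i assume i: "i \<in> A"
    have "x i \<le> (\<Sum>j\<in>A. x j)" using assms i by (intro member_le_sum) auto
    then show "(x i)^2 \<le> x i * (\<Sum>j\<in>A. x j)" using assms(2)[OF i] by (simp add: power2_eq_square mult_left_mono)
  qed
  also have "\<dots> = (\<Sum>i\<in>A. x i)^2" by (simp add: sum_distrib_right[symmetric] power2_eq_square)
  finally show ?thesis .
qed

lemma var_vertex:
  assumes v: "valid n k c" and n: "0 < n" and j: "j \<in> {1..k}" and ge: "gamma n k c \<le> 1 - \<epsilon>"
  shows "2 * \<epsilon> * (gamma n k c - (alpha n c j)^2) \<le>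
    (\<Sum>i\<in>{1..k}. ((alpha n c i)^2 + ind (j = i) * (1 - gamma n k c)) * (1 - ((alpha n c i)^2 + ind (j = i) * (1 - gamma n k c))))"
proof -
  define g where "g = gamma n k c"
  define q where "q = (\<lambda>i. (alpha n c i)^2 + ind (j = i) * (1 - g))"
  define s where "s = g - (alpha n c j)^2"
  have fin: "finite {1..k}" by simp
  have rem: "(\<Sum>i\<in>{1..k}. (alpha n c i)^2) = (alpha n c j)^2 + (\<Sum>i\<in>{1..k} - {j}. (alpha n c i)^2)"
    using j by (simp add: sum.remove)
  have s_eq: "(\<Sum>i\<in>{1..k} - {j}. (alpha n c i)^2) = s" unfolding s_def g_def gamma_def rem by simp
  have s0: "0 \<le> s" using s_eq[symmetric] by (simp add: sum_nonneg)
  have sq: "\<And>i. i \<in> {1..k} - {j} \<Longrightarrow> q i = (alpha n c i)^2" unfolding q_def by auto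
  have sumq: "(\<Sum>i\<in>{1..k}. q i) = 1"
    unfolding q_def using j by (simp add: sum.distrib g_def gamma_def if_distrib[of "\<lambda>z. z * _"] sum.delta cong: if_cong)
  have "(\<Sum>i\<in>{1..k}. (q i)^2) = (q j)^2 + (\<Sum>i\<in>{1..k} - {j}. (q i)^2)"
    using j by (simp add: sum.remove)
  also have "(\<Sum>i\<in>{1..k} - {j}. (q i)^2) = (\<Sum>i\<in>{1..k} - {j}. ((alpha n c i)^2)^2)"
    by (intro sum.cong refl) (simp add: sq)
  also have "\<dots> \<le> s^2" unfolding s_eq[symmetric] by (rule sum_sq_le_sq_sum) auto
  also have "q j = 1 - s" unfolding q_def s_def by simp
  finally have sq2: "(\<Sum>i\<in>{1..k}. (q i)^2) \<le> (1 - s)^2 + s^2" by simp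
  have "(\<Sum>i\<in>{1..k}. q i * (1 - q i)) = 1 - (\<Sum>i\<in>{1..k}. (q i)^2)"
    using sumq by (simp add: algebra_simps sum_subtractf power2_eq_square)
  also have "\<dots> \<ge> 2 * s * (1 - s)" using sq2 by (simp add: power2_eq_square algebra_simps)
  finally have A: "2 * s * (1 - s) \<le> (\<Sum>i\<in>{1..k}. q i * (1 - q i))" .
  have "\<epsilon> \<le> 1 - s" unfolding s_def g_def using ge zero_le_power2[of "alpha n c j"] by linarith
  then have "2 * s * \<epsilon> \<le> 2 * s * (1 - s)" using s0 by (intro mult_left_mono) auto
  with A show ?thesis unfolding q_def g_def s_def by (simp add: algebra_simps)
qed



lemma alpha_le_1_eps:
  assumes "valid n k c" "j \<in> {1..k}" "gamma n k c \<le> 1 - \<epsilon>" "0 < \<epsilon>" "\<epsilon> < 1"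
  shows "alpha n c j \<le> 1 - \<epsilon> / 2"
proof -
  have "(alpha n c j)^2 \<le> gamma n k c"
    unfolding gamma_def using assms(2) by (rule member_le_sum) auto
  also have "\<dots> \<le> (1 - \<epsilon> / 2)^2"
  proof -
    have "(1 - \<epsilon> / 2)^2 = 1 - \<epsilon> + \<epsilon> * \<epsilon> / 4" by (simp add: power2_eq_square algebra_simps)
    moreover have "0 \<le> \<epsilon> * \<epsilon>" by simp
    ultimately show ?thesis using assms(3) by linarith
  qed
  finally have "(alpha n c j)^2 \<le> (1 - \<epsilon> / 2)^2" .
  then show ?thesis by (rule power2_le_imp_le) (use assms(5) in simp)
qed

lemma drift_2ch:
  assumes v: "valid n k c" and n: "0 < n" and ge: "gamma n k c \<le> 1 - \<epsilon>" and e: "0 < \<epsilon>" "\<epsilon> < 1"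
  shows "gamma n k c + \<epsilon>^2 / (real n)^2 \<le> measure_pmf.expectation (two_choices_step n c) (gamma n k)"
proof -
  define D where "D = (\<lambda>u::nat. two_choices_vertex n c u)"
  define g where "g = gamma n k c"
  have q: "pmf (D u) i = (alpha n c i)^2 + ind (c u = i) * (1 - g)" if "i \<in> {1..k}" for u i
    unfolding D_def g_def using pmf_2ch[OF v n that] .
  have Pv: "Pv D n i = rr n k c i" if "i \<in> {1..k}" for i
  proof -
    have "(\<Sum>u\<in>{0..<n}. pmf (D u) i) = (\<Sum>u\<in>{0..<n}. (alpha n c i)^2 + ind (c u = i) * (1 - g))"
      by (intro sum.cong refl) (simp add: q[OF that])
    also have "\<dots> = real n * (alpha n c i)^2 + real (card {v \<in> {0..<n}. c v = i}) * (1 - g)"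
      unfolding card_as_sum by (simp add: sum.distrib sum_distrib_right)
    also have "\<dots> = real n * rr n k c i"
      unfolding rr_def alpha_def g_def using n by (simp add: field_simps)
    finally show ?thesis unfolding Pv_def using n by simp
  qed
  have E: "measure_pmf.expectation (two_choices_step n c) (gamma n k) =
    (\<Sum>i\<in>{1..k}. (Pv D n i)^2) + (\<Sum>u\<in>{0..<n}. \<Sum>i\<in>{1..k}. pmf (D u) i * (1 - pmf (D u) i)) / (real n)^2"
    unfolding two_choices_step_def D_def by (rule E_gamma[OF n])
  have s1: "(\<Sum>i\<in>{1..k}. (Pv D n i)^2) = (\<Sum>i\<in>{1..k}. (rr n k c i)^2)" by (intro sum.cong refl) (simp add: Pv)
  have "(\<Sum>u\<in>{0..<n}. 2 * \<epsilon> * (g - (alpha n c (c u))^2)) \<le> (\<Sum>u\<in>{0..<n}. \<Sum>i\<in>{1..k}. pmf (D u) i * (1 - pmf (D u) i))"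
  proof (intro sum_mono)
    fix u assume u: "u \<in> {0..<n}"
    then have cu: "c u \<in> {1..k}" using v unfolding valid_def by auto
    have "2 * \<epsilon> * (g - (alpha n c (c u))^2) \<le>
      (\<Sum>i\<in>{1..k}. ((alpha n c i)^2 + ind (c u = i) * (1 - g)) * (1 - ((alpha n c i)^2 + ind (c u = i) * (1 - g))))"
      unfolding g_def by (rule var_vertex[OF v n cu ge])
    also have "\<dots> = (\<Sum>i\<in>{1..k}. pmf (D u) i * (1 - pmf (D u) i))" by (intro sum.cong refl) (simp add: q)
    finally show "2 * \<epsilon> * (g - (alpha n c (c u))^2) \<le> (\<Sum>i\<in>{1..k}. pmf (D u) i * (1 - pmf (D u) i))" .
  qed
  moreover have "(\<Sum>u\<in>{0..<n}. 2 * \<epsilon> * (g - (alpha n c (c u))^2)) = real n * (\<Sum>j\<in>{1..k}. alpha n c j * (2 * \<epsilon> * (g - (alpha n c j)^2)))"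
    by (rule sum_group_alpha[OF v n])
  moreover have "\<epsilon>^2 / real n \<le> (\<Sum>j\<in>{1..k}. alpha n c j * (2 * \<epsilon> * (g - (alpha n c j)^2)))"
  proof -
    have "(\<Sum>j\<in>{1..k}. alpha n c j * (2 * \<epsilon> * (g - (alpha n c j)^2))) = 2 * \<epsilon> * (g * (\<Sum>j\<in>{1..k}. alpha n c j) - (\<Sum>j\<in>{1..k}. alpha n c j * (alpha n c j)^2))"
      by (simp add: sum_distrib_left sum_subtractf algebra_simps)
    also have "g * (\<Sum>j\<in>{1..k}. alpha n c j) - (\<Sum>j\<in>{1..k}. alpha n c j * (alpha n c j)^2) = (\<Sum>j\<in>{1..k}. (alpha n c j)^2 * (1 - alpha n c j))"
      using sum_alpha[OF v n] unfolding g_def gamma_def by (simp add: sum_subtractf algebra_simps power2_eq_square)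
    also have "(\<Sum>j\<in>{1..k}. (alpha n c j)^2 * (1 - alpha n c j)) \<ge> (\<Sum>j\<in>{1..k}. (alpha n c j)^2 * (\<epsilon> / 2))"
    proof (intro sum_mono mult_left_mono)
      fix j assume "j \<in> {1..k}"
      then have "alpha n c j \<le> 1 - \<epsilon> / 2" by (rule alpha_le_1_eps[OF v _ ge e])
      then show "\<epsilon> / 2 \<le> 1 - alpha n c j" by linarith
    qed simp
    then have "2 * \<epsilon> * (\<Sum>j\<in>{1..k}. (alpha n c j)^2 * (\<epsilon> / 2)) \<le> 2 * \<epsilon> * (\<Sum>j\<in>{1..k}. (alpha n c j)^2 * (1 - alpha n c j))"
      using e by (intro mult_left_mono) auto
    moreover have "2 * \<epsilon> * (\<Sum>j\<in>{1..k}. (alpha n c j)^2 * (\<epsilon> / 2)) = \<epsilon>^2 * g"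
    proof -
      have "(\<Sum>j\<in>{1..k}. (alpha n c j)^2 * (\<epsilon> / 2)) = g * (\<epsilon> / 2)"
        unfolding g_def gamma_def by (rule sum_distrib_right[symmetric])
      then show ?thesis by (simp only: power2_eq_square) (simp add: algebra_simps)
    qed
    moreover have "\<epsilon>^2 / real n \<le> \<epsilon>^2 * g"
      using gamma_ge_inv_n[OF v n] unfolding g_def by (simp add: divide_inverse mult_left_mono)
    ultimately show ?thesis by linarith
  qed
  ultimately have V: "\<epsilon>^2 \<le> (\<Sum>u\<in>{0..<n}. \<Sum>i\<in>{1..k}. pmf (D u) i * (1 - pmf (D u) i))"
  proof -
    assume a1: "(\<Sum>u\<in>{0..<n}. 2 * \<epsilon> * (g - (alpha n c (c u))^2)) \<le> (\<Sum>u\<in>{0..<n}. \<Sum>i\<in>{1..k}. pmf (D u) i * (1 - pmf (D u) i))"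
      and a2: "(\<Sum>u\<in>{0..<n}. 2 * \<epsilon> * (g - (alpha n c (c u))^2)) = real n * (\<Sum>j\<in>{1..k}. alpha n c j * (2 * \<epsilon> * (g - (alpha n c j)^2)))"
      and a3: "\<epsilon>^2 / real n \<le> (\<Sum>j\<in>{1..k}. alpha n c j * (2 * \<epsilon> * (g - (alpha n c j)^2)))"
    have "real n * (\<epsilon>^2 / real n) \<le> real n * (\<Sum>j\<in>{1..k}. alpha n c j * (2 * \<epsilon> * (g - (alpha n c j)^2)))"
      using a3 by (intro mult_left_mono) auto
    then show ?thesis using a1 a2 n by simp
  qed
  have Sg: "g \<le> (\<Sum>i\<in>{1..k}. (rr n k c i)^2)" unfolding g_def by (rule sum_rr2_ge[OF v n])
  have "\<epsilon>^2 / (real n)^2 \<le> (\<Sum>u\<in>{0..<n}. \<Sum>i\<in>{1..k}. pmf (D u) i * (1 - pmf (D u) i)) / (real n)^2"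
    using V by (intro divide_right_mono) auto
  then show ?thesis unfolding E s1 g_def[symmetric] using Sg by linarith
qed



lemma Pv_3maj:
  assumes v: "valid n k c" and n: "0 < n" and i: "i \<in> {1..k}"
  shows "Pv (\<lambda>u. three_majority_vertex n c) n i = rr n k c i"
  unfolding Pv_def rr_def using pmf_3maj[OF v n i] n by simp

lemma Pv_2ch:
  assumes v: "valid n k c" and n: "0 < n" and i: "i \<in> {1..k}"
  shows "Pv (\<lambda>u. two_choices_vertex n c u) n i = rr n k c i"
proof -
  define g where "g = gamma n k c"
  have "(\<Sum>u\<in>{0..<n}. pmf (two_choices_vertex n c u) i) = (\<Sum>u\<in>{0..<n}. (alpha n c i)^2 + ind (c u = i) * (1 - g))"
    by (intro sum.cong refl) (simp add: pmf_2ch[OF v n i] g_def)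
  also have "\<dots> = real n * (alpha n c i)^2 + real (card {v \<in> {0..<n}. c v = i}) * (1 - g)"
    unfolding card_as_sum by (simp add: sum.distrib sum_distrib_right)
  also have "\<dots> = real n * rr n k c i"
    unfolding rr_def alpha_def g_def using n by (simp add: field_simps)
  finally show ?thesis unfolding Pv_def using n by simp
qed

lemma tail_gamma:
  assumes n: "0 < n" and P4: "(\<Sum>i\<in>{1..k}. (Pv D n i)^2) \<le> 4 * g0" and lt: "g0 < x"
  shows "measure_pmf.prob (Pi_pmf {0..<n} 0 D) {f. 100 * x < gamma n k f} \<le> exp (1/2 - 23/4 * x * real n)"
proof -
  have nn: "0 < real n" using n by simp
  have sub: "{f. 100 * x < gamma n k f} \<subseteq> {f. 46 * x * (real n)^2 < Nrm {0..<n} D {1..k} f}"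
  proof safe
    fix f assume a: "100 * x < gamma n k f"
    have "gamma n k f \<le> 2 * (\<Sum>i\<in>{1..k}. (Pv D n i)^2) + 2 * Nrm {0..<n} D {1..k} f / (real n)^2"
      by (rule gamma_upper[OF n])
    then have "92 * x < 2 * Nrm {0..<n} D {1..k} f / (real n)^2" using a P4 lt by linarith
    then have "46 * x < Nrm {0..<n} D {1..k} f / (real n)^2" by simp
    then show "46 * x * (real n)^2 < Nrm {0..<n} D {1..k} f" using nn by (simp add: pos_less_divide_eq)
  qed
  have "measure_pmf.prob (Pi_pmf {0..<n} 0 D) {f. 100 * x < gamma n k f}
      \<le> measure_pmf.prob (Pi_pmf {0..<n} 0 D) {f. 46 * x * (real n)^2 < Nrm {0..<n} D {1..k} f}"
    by (rule measure_pmf.finite_measure_mono[OF sub]) simp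
  also have "\<dots> \<le> exp (4 * real (card {0..<n}) * (1 / (8 * real n)) - (1 / (8 * real n)) * (46 * x * (real n)^2))"
    by (rule tail_Pi) (use nn in auto)
  also have "4 * real (card {0..<n}) * (1 / (8 * real n)) - (1 / (8 * real n)) * (46 * x * (real n)^2) = 1/2 - 23/4 * x * real n"
    using nn by (simp add: field_simps power2_eq_square)
  finally show ?thesis .
qed

lemma step_3maj:
  assumes v: "valid n k c" and n: "0 < n" and lt: "gamma n k c < x" and xe: "x \<le> 1 - \<epsilon>" and e: "0 < \<epsilon>"
    and tl: "exp (1/2 - 23/4 * x * real n) \<le> \<epsilon> / real n / 2"
  shows "1 + measure_pmf.expectation (three_majority_step n c)
      (\<lambda>f. if gamma n k f < x then 2 / (\<epsilon> / real n) * (100 * x - gamma n k f) else 0)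
      \<le> 2 / (\<epsilon> / real n) * (100 * x - gamma n k c)"
proof (rule drift_step)
  show "\<And>f. 0 \<le> gamma n k f" by (rule gamma_nonneg)
  show "\<And>f. gamma n k f \<le> 1" by (rule gamma_le1)
  show "gamma n k c + \<epsilon> / real n \<le> measure_pmf.expectation (three_majority_step n c) (gamma n k)"
    by (rule drift_3maj[OF v n]) (use lt xe in linarith)
  have x0: "0 \<le> x" using lt gamma_nonneg[of n k c] by linarith
  show "0 < \<epsilon> / real n" using e n by simp
  show "x \<le> 100 * x" "0 \<le> 100 * x" using x0 by auto
  have P4: "(\<Sum>i\<in>{1..k}. (Pv (\<lambda>u. three_majority_vertex n c) n i)^2) \<le> 4 * gamma n k c"
    using sum_rr2_le[of n k c] by (simp add: Pv_3maj[OF v n])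
  show "measure_pmf.prob (three_majority_step n c) {f. 100 * x < gamma n k f} \<le> \<epsilon> / real n / 2"
    unfolding three_majority_step_def using tail_gamma[OF n P4 lt] tl by linarith
qed

lemma step_2ch:
  assumes v: "valid n k c" and n: "0 < n" and lt: "gamma n k c < x" and xe: "x \<le> 1 - \<epsilon>" and e: "0 < \<epsilon>" "\<epsilon> < 1"
    and tl: "exp (1/2 - 23/4 * x * real n) \<le> \<epsilon>^2 / (real n)^2 / 2"
  shows "1 + measure_pmf.expectation (two_choices_step n c)
      (\<lambda>f. if gamma n k f < x then 2 / (\<epsilon>^2 / (real n)^2) * (100 * x - gamma n k f) else 0)
      \<le> 2 / (\<epsilon>^2 / (real n)^2) * (100 * x - gamma n k c)"
proof (rule drift_step)
  show "\<And>f. 0 \<le> gamma n k f" by (rule gamma_nonneg)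
  show "\<And>f. gamma n k f \<le> 1" by (rule gamma_le1)
  show "gamma n k c + \<epsilon>^2 / (real n)^2 \<le> measure_pmf.expectation (two_choices_step n c) (gamma n k)"
    by (rule drift_2ch[OF v n _ e]) (use lt xe in linarith)
  have x0: "0 \<le> x" using lt gamma_nonneg[of n k c] by linarith
  show "0 < \<epsilon>^2 / (real n)^2" using e n by simp
  show "x \<le> 100 * x" "0 \<le> 100 * x" using x0 by auto
  have P4: "(\<Sum>i\<in>{1..k}. (Pv (\<lambda>u. two_choices_vertex n c u) n i)^2) \<le> 4 * gamma n k c"
    using sum_rr2_le[of n k c] by (simp add: Pv_2ch[OF v n])
  show "measure_pmf.prob (two_choices_step n c) {f. 100 * x < gamma n k f} \<le> \<epsilon>^2 / (real n)^2 / 2"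
    unfolding two_choices_step_def using tail_gamma[OF n P4 lt] tl by linarith
qed



lemma set_3maj_vertex:
  assumes "valid n k c" "0 < n"
  shows "set_pmf (three_majority_vertex n c) \<subseteq> {1..k}"
  using assms unfolding three_majority_vertex_def valid_def
  by (auto simp: set_pmf_of_set)

lemma set_2ch_vertex:
  assumes "valid n k c" "0 < n" "v < n"
  shows "set_pmf (two_choices_vertex n c v) \<subseteq> {1..k}"
  using assms unfolding two_choices_vertex_def valid_def
  by (auto simp: set_pmf_of_set)

lemma Pi_valid:
  assumes "\<And>u. u < n \<Longrightarrow> set_pmf (D u) \<subseteq> {1..k}" "f \<in> set_pmf (Pi_pmf {0..<n} 0 D)"
  shows "valid n k f"
  unfolding valid_def
proof (intro allI impI)
  fix u assume u: "u < n"
  have "set_pmf (Pi_pmf {0..<n} 0 D) = PiE_dflt {0..<n} 0 (set_pmf \<circ> D)" by (rule set_Pi_pmf) simp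
  then have "f u \<in> set_pmf (D u)" using assms(2) u unfolding PiE_dflt_def by auto
  then show "f u \<in> {1..k}" using assms(1)[OF u] by blast
qed

lemma Pi_finite:
  fixes D :: "nat \<Rightarrow> nat pmf" and n :: nat
  assumes "\<And>u. u < n \<Longrightarrow> set_pmf (D u) \<subseteq> {1..k}"
  shows "finite (set_pmf (Pi_pmf {0..<n} 0 D))"
proof -
  have "set_pmf (Pi_pmf {0..<n} 0 D) = PiE_dflt {0..<n} 0 (set_pmf \<circ> D)" by (rule set_Pi_pmf) simp
  moreover have "finite (PiE_dflt {0..<n} 0 (set_pmf \<circ> D))"
  proof (rule finite_PiE_dflt)
    fix u assume "u \<in> {0..<n}"
    then show "finite ((set_pmf \<circ> D) u)" using assms[of u] by (auto intro: finite_subset)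
  qed simp
  ultimately show ?thesis by simp
qed

lemma tau_eq_surv:
  assumes T: "0 < T"
  shows "tau_gamma_ge_prob K n k x c0 T = surv K (gamma n k) x (nat \<lceil>T\<rceil>) c0"
proof -
  define N where "N = nat \<lceil>T\<rceil>"
  have NT: "int N = \<lceil>T\<rceil>" unfolding N_def using T by simp
  have tl: "real t < T \<longleftrightarrow> t < N" for t
  proof -
    have "t < N \<longleftrightarrow> int t < int N" by simp
    also have "\<dots> \<longleftrightarrow> int t < \<lceil>T\<rceil>" unfolding NT ..
    also have "\<dots> \<longleftrightarrow> real t < T" by (subst less_ceiling_iff) simp
    finally show ?thesis by simp
  qed
  let ?E1 = "{l. \<forall>t<length l. real t < T \<longrightarrow> gamma n k (l ! t) < x}"
  let ?E2 = "{l. \<forall>t<N. gamma n k (l ! t) < x}"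
  have "?E1 \<inter> set_pmf (traj K c0 N) = ?E2 \<inter> set_pmf (traj K c0 N)"
  proof (rule set_eqI)
    fix l
    show "l \<in> ?E1 \<inter> set_pmf (traj K c0 N) \<longleftrightarrow> l \<in> ?E2 \<inter> set_pmf (traj K c0 N)"
    proof (cases "l \<in> set_pmf (traj K c0 N)")
      case True
      then have len: "length l = Suc N" by (rule set_traj_length)
      have "(\<forall>t<length l. real t < T \<longrightarrow> gamma n k (l ! t) < x) \<longleftrightarrow> (\<forall>t<N. gamma n k (l ! t) < x)"
        unfolding len tl by auto
      then show ?thesis using True by simp
    qed simp
  qed
  note eq = this
  have "measure_pmf.prob (traj K c0 N) ?E1 = measure_pmf.prob (traj K c0 N) (?E1 \<inter> set_pmf (traj K c0 N))"
    by (rule measure_Int_set_pmf[symmetric])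
  also have "\<dots> = measure_pmf.prob (traj K c0 N) (?E2 \<inter> set_pmf (traj K c0 N))" by (simp only: eq)
  also have "\<dots> = measure_pmf.prob (traj K c0 N) ?E2" by (rule measure_Int_set_pmf)
  finally have "measure_pmf.prob (traj K c0 N) ?E1 = measure_pmf.prob (traj K c0 N) ?E2" .
  then show ?thesis unfolding tau_gamma_ge_prob_def surv_traj N_def .
qed

lemma final_bound:
  fixes K :: "config \<Rightarrow> config pmf" and d :: real
  assumes T: "0 < T" and inv0: "valid n k c0" and x0: "0 \<le> x" and d: "0 < d"
    and inv_step: "\<And>c c'. valid n k c \<Longrightarrow> c' \<in> set_pmf (K c) \<Longrightarrow> valid n k c'"
    and fin: "\<And>c. valid n k c \<Longrightarrow> finite (set_pmf (K c))"
    and step: "\<And>c. valid n k c \<Longrightarrow> gamma n k c < x \<Longrightarrow>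
        1 + measure_pmf.expectation (K c) (\<lambda>f. if gamma n k f < x then 2 / d * (100 * x - gamma n k f) else 0)
        \<le> 2 / d * (100 * x - gamma n k c)"
  shows "tau_gamma_ge_prob K n k x c0 T \<le> 200 * x / d / T"
proof -
  define N where "N = nat \<lceil>T\<rceil>"
  have NT: "T \<le> real N" unfolding N_def by linarith
  have N1: "1 \<le> N" unfolding N_def using T by linarith
  have S: "(\<Sum>j<N. surv K (gamma n k) x (Suc j) c0) \<le>
        (if gamma n k c0 < x then 2 / d * (100 * x - gamma n k c0) else 0)"
  proof (rule surv_sum[where Inv="valid n k"])
    show "valid n k c0" by fact
    show "\<And>c c'. valid n k c \<Longrightarrow> c' \<in> set_pmf (K c) \<Longrightarrow> valid n k c'" by fact
    show "\<And>c. valid n k c \<Longrightarrow> finite (set_pmf (K c))" by fact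
    show "\<And>c. valid n k c \<Longrightarrow> gamma n k c < x \<Longrightarrow> 0 \<le> 2 / d * (100 * x - gamma n k c)"
      using d x0 by (auto intro!: mult_nonneg_nonneg)
    show "\<And>c. valid n k c \<Longrightarrow> gamma n k c < x \<Longrightarrow>
        1 + measure_pmf.expectation (K c) (\<lambda>c'. if gamma n k c' < x then 2 / d * (100 * x - gamma n k c') else 0)
        \<le> 2 / d * (100 * x - gamma n k c)" by (rule step)
  qed
  also have "\<dots> \<le> 2 / d * (100 * x)"
  proof -
    have "0 \<le> 2 / d" using d by simp
    moreover have "100 * x - gamma n k c0 \<le> 100 * x" using gamma_nonneg[of n k c0] by simp
    ultimately have "2 / d * (100 * x - gamma n k c0) \<le> 2 / d * (100 * x)" by (rule mult_left_mono[rotated])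
    moreover have "0 \<le> 2 / d * (100 * x)" using d x0 by simp
    ultimately show ?thesis by simp
  qed
  finally have S2: "(\<Sum>j<N. surv K (gamma n k) x (Suc j) c0) \<le> 200 * x / d" by simp
  have "real N * surv K (gamma n k) x N c0 = (\<Sum>j<N. surv K (gamma n k) x N c0)" by simp
  also have "\<dots> \<le> (\<Sum>j<N. surv K (gamma n k) x (Suc j) c0)"
    by (intro sum_mono surv_anti) auto
  finally have "real N * surv K (gamma n k) x N c0 \<le> 200 * x / d" using S2 by linarith
  note h = this
  have Np: "0 < real N" using N1 by simp
  have "surv K (gamma n k) x N c0 \<le> 200 * x / d / real N"
    by (rule iffD2[OF pos_le_divide_eq[OF Np]]) (use h in \<open>simp add: mult.commute\<close>)
  also have "\<dots> \<le> 200 * x / d / T"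
    using T NT d x0 by (intro divide_left_mono) auto
  finally show ?thesis unfolding tau_eq_surv[OF T] N_def .
qed



lemma exp2_ge4: "4 \<le> exp (2::real)"
proof -
  have "2 \<le> exp (1::real)" using exp_ge_add_one_self[of 1] by simp
  then have "2 * 2 \<le> exp (1::real) * exp 1" by (intro mult_mono) auto
  also have "exp (1::real) * exp 1 = exp 2" by (simp add: exp_add[symmetric])
  finally show ?thesis by simp
qed

theorem lemma5p12:
  fixes C \<epsilon> :: real
  assumes "C > exp (-1)" and "0 < \<epsilon>" and "\<epsilon> < 1"
  shows "\<exists>n0::nat. \<forall>n\<ge>n0. \<forall>(k::nat) (x_gamma::real) (T::real) (opn0::config).
           1 \<le> k \<and> k \<le> n \<and> (\<forall>v<n. opn0 v \<in> {1..k}) \<and>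
           C^2 * (log 2 (real n))^2 / real n \<le> x_gamma \<and> x_gamma \<le> 1 - \<epsilon> \<and> T > 0
           \<longrightarrow>
           tau_gamma_ge_prob (three_majority_step n) n k x_gamma opn0 T
              \<le> 64 * exp 2 / \<epsilon> * (x_gamma * real n / T) \<and>
           tau_gamma_ge_prob (two_choices_step n) n k x_gamma opn0 T
              \<le> 192 * exp 2 / \<epsilon>^2 * (x_gamma * (real n)^2 / T)"
proof -
  have C0: "0 < C" using assms(1) by (meson exp_gt_zero less_trans)
  define cc where "cc = 23/4 * C^2"
  have cc0: "0 < cc" unfolding cc_def using C0 by simp
  have lim: "((\<lambda>n::nat. exp (1/2 - cc * (log 2 (real n))^2) * (real n)^2) \<longlongrightarrow> 0) sequentially"
    using cc0 by real_asymp
  have e2: "0 < \<epsilon>^2 / 2" using assms(2) by simp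
  have ev: "eventually (\<lambda>n::nat. exp (1/2 - cc * (log 2 (real n))^2) * (real n)^2 < \<epsilon>^2 / 2 \<and> 2 \<le> n) sequentially"
    by (rule eventually_conj[OF order_tendstoD(2)[OF lim e2] eventually_ge_at_top])
  then obtain n0 where n0: "\<And>n. n \<ge> n0 \<Longrightarrow> exp (1/2 - cc * (log 2 (real n))^2) * (real n)^2 < \<epsilon>^2 / 2 \<and> 2 \<le> n"
    unfolding eventually_sequentially by blast
  show ?thesis
  proof (intro exI allI impI)
    fix n k :: nat and x T :: real and opn0 :: config
    assume nn0: "n0 \<le> n"
    assume H: "1 \<le> k \<and> k \<le> n \<and> (\<forall>v<n. opn0 v \<in> {1..k}) \<and>
           C^2 * (log 2 (real n))^2 / real n \<le> x \<and> x \<le> 1 - \<epsilon> \<and> T > 0"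
    have n2: "2 \<le> n" and asy: "exp (1/2 - cc * (log 2 (real n))^2) * (real n)^2 < \<epsilon>^2 / 2" using n0[OF nn0] by auto
    have n: "0 < n" using n2 by simp
    have rn: "0 < real n" using n by simp
    have xlow: "C^2 * (log 2 (real n))^2 / real n \<le> x" and xe: "x \<le> 1 - \<epsilon>" and T: "0 < T" using H by auto
    have v0: "valid n k opn0" unfolding valid_def using H by auto
    have x0: "0 \<le> x" using xlow rn by (meson divide_nonneg_pos mult_nonneg_nonneg order_trans zero_le_power2)
    have xn: "C^2 * (log 2 (real n))^2 \<le> x * real n" using xlow rn by (simp add: pos_divide_le_eq)
    have "exp (1/2 - 23/4 * x * real n) \<le> exp (1/2 - cc * (log 2 (real n))^2)"
      unfolding cc_def using xn by simp
    also have "\<dots> < \<epsilon>^2 / 2 / (real n)^2" using asy rn by (simp add: pos_less_divide_eq)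
    finally have tl2: "exp (1/2 - 23/4 * x * real n) \<le> \<epsilon>^2 / (real n)^2 / 2" by simp
    have "\<epsilon>^2 / (real n)^2 = (\<epsilon> / real n)^2" by (simp add: power_divide)
    also have "\<dots> \<le> \<epsilon> / real n"
    proof -
      have "\<epsilon> / real n \<le> 1" using assms(2,3) n2 by (simp add: divide_le_eq)
      moreover have "0 \<le> \<epsilon> / real n" using assms(2) by simp
      ultimately show ?thesis unfolding power2_eq_square by (rule mult_left_le)
    qed
    finally have "\<epsilon>^2 / (real n)^2 / 2 \<le> \<epsilon> / real n / 2" by (rule divide_right_mono) simp
    with tl2 have tl1: "exp (1/2 - 23/4 * x * real n) \<le> \<epsilon> / real n / 2" by (rule order_trans)
    have P1: "tau_gamma_ge_prob (three_majority_step n) n k x opn0 T \<le> 200 * x / (\<epsilon> / real n) / T"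
    proof (rule final_bound[OF T v0 x0])
      show "0 < \<epsilon> / real n" using assms(2) rn by simp
      show "\<And>c c'. valid n k c \<Longrightarrow> c' \<in> set_pmf (three_majority_step n c) \<Longrightarrow> valid n k c'"
      proof -
        fix c c' assume vc: "valid n k c" and c': "c' \<in> set_pmf (three_majority_step n c)"
        have mem: "c' \<in> set_pmf (Pi_pmf {0..<n} 0 (\<lambda>v. three_majority_vertex n c))" using c' unfolding three_majority_step_def .
        have sv: "\<And>u. u < n \<Longrightarrow> set_pmf ((\<lambda>v. three_majority_vertex n c) u) \<subseteq> {1..k}" using set_3maj_vertex[OF vc n] by simp
        show "valid n k c'" by (rule Pi_valid[OF sv mem])
      qed
      show "\<And>c. valid n k c \<Longrightarrow> finite (set_pmf (three_majority_step n c))"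
      proof -
        fix c assume vc: "valid n k c"
        have sv: "\<And>u. u < n \<Longrightarrow> set_pmf ((\<lambda>v. three_majority_vertex n c) u) \<subseteq> {1..k}" using set_3maj_vertex[OF vc n] by simp
        show "finite (set_pmf (three_majority_step n c))" unfolding three_majority_step_def by (rule Pi_finite[OF sv])
      qed
      show "\<And>c. valid n k c \<Longrightarrow> gamma n k c < x \<Longrightarrow>
        1 + measure_pmf.expectation (three_majority_step n c) (\<lambda>f. if gamma n k f < x then 2 / (\<epsilon> / real n) * (100 * x - gamma n k f) else 0)
        \<le> 2 / (\<epsilon> / real n) * (100 * x - gamma n k c)"
        by (rule step_3maj[OF _ n _ xe assms(2) tl1])
    qed
    have P2: "tau_gamma_ge_prob (two_choices_step n) n k x opn0 T \<le> 200 * x / (\<epsilon>^2 / (real n)^2) / T"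
    proof (rule final_bound[OF T v0 x0])
      show "0 < \<epsilon>^2 / (real n)^2" using assms(2) rn by simp
      show "\<And>c c'. valid n k c \<Longrightarrow> c' \<in> set_pmf (two_choices_step n c) \<Longrightarrow> valid n k c'"
      proof -
        fix c c' assume vc: "valid n k c" and c': "c' \<in> set_pmf (two_choices_step n c)"
        have mem: "c' \<in> set_pmf (Pi_pmf {0..<n} 0 (\<lambda>v. two_choices_vertex n c v))" using c' unfolding two_choices_step_def .
        have sv: "\<And>u. u < n \<Longrightarrow> set_pmf ((\<lambda>v. two_choices_vertex n c v) u) \<subseteq> {1..k}" using set_2ch_vertex[OF vc n] by simp
        show "valid n k c'" by (rule Pi_valid[OF sv mem])
      qed
      show "\<And>c. valid n k c \<Longrightarrow> finite (set_pmf (two_choices_step n c))"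
      proof -
        fix c assume vc: "valid n k c"
        have sv: "\<And>u. u < n \<Longrightarrow> set_pmf ((\<lambda>v. two_choices_vertex n c v) u) \<subseteq> {1..k}" using set_2ch_vertex[OF vc n] by simp
        show "finite (set_pmf (two_choices_step n c))" unfolding two_choices_step_def by (rule Pi_finite[OF sv])
      qed
      show "\<And>c. valid n k c \<Longrightarrow> gamma n k c < x \<Longrightarrow>
        1 + measure_pmf.expectation (two_choices_step n c) (\<lambda>f. if gamma n k f < x then 2 / (\<epsilon>^2 / (real n)^2) * (100 * x - gamma n k f) else 0)
        \<le> 2 / (\<epsilon>^2 / (real n)^2) * (100 * x - gamma n k c)"
        by (rule step_2ch[OF _ n _ xe assms(2,3) tl2])
    qed
    define Q1 where "Q1 = x * real n / (\<epsilon> * T)"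
    have Q1: "0 \<le> Q1" unfolding Q1_def using x0 rn assms(2) T by simp
    have "200 * x / (\<epsilon> / real n) / T = 200 * Q1" unfolding Q1_def using assms(2) rn T by (simp add: field_simps)
    also have "\<dots> \<le> 64 * exp 2 * Q1" using exp2_ge4 Q1 by (intro mult_right_mono) auto
    also have "\<dots> = 64 * exp 2 / \<epsilon> * (x * real n / T)" unfolding Q1_def using assms(2) T by (simp add: field_simps)
    finally have R1: "tau_gamma_ge_prob (three_majority_step n) n k x opn0 T \<le> 64 * exp 2 / \<epsilon> * (x * real n / T)"
      using P1 by linarith
    define Q2 where "Q2 = x * (real n)^2 / (\<epsilon>^2 * T)"
    have Q2: "0 \<le> Q2" unfolding Q2_def using x0 rn assms(2) T by simp
    have "200 * x / (\<epsilon>^2 / (real n)^2) / T = 200 * Q2" unfolding Q2_def using assms(2) rn T by (simp add: field_simps)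
    also have "\<dots> \<le> 192 * exp 2 * Q2" using exp2_ge4 Q2 by (intro mult_right_mono) auto
    also have "\<dots> = 192 * exp 2 / \<epsilon>^2 * (x * (real n)^2 / T)" unfolding Q2_def using assms(2) T by (simp add: field_simps)
    finally have R2: "tau_gamma_ge_prob (two_choices_step n) n k x opn0 T \<le> 192 * exp 2 / \<epsilon>^2 * (x * (real n)^2 / T)"
      using P2 by linarith
    show "tau_gamma_ge_prob (three_majority_step n) n k x opn0 T \<le> 64 * exp 2 / \<epsilon> * (x * real n / T) \<and>
          tau_gamma_ge_prob (two_choices_step n) n k x opn0 T \<le> 192 * exp 2 / \<epsilon>^2 * (x * (real n)^2 / T)"
      using R1 R2 by simp
  qed
qed


end
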